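(* Let $(\Omega,\mathcal{F},P_0)$ be a complete probability space, $\epsilon\in(0,1)$, $\mathcal{C}\subseteq\mathcal{F}$ a sub-$\sigma$-algebra, and $\rho$ a sublinear operator on $L^{2+\epsilon}_{\mathcal{F}}(\Omega,P_0)$ with representation set $\mathcal{P}$, satisfying the standing assumptions below, and suppose $\rho$ is stable and proper. For $\xi\in L^{4+2\epsilon}_{\mathcal{F}}(P_0)$ let $\rho(\xi\mid\mathcal{C})$ denote the (unique $P_0$-a.s.) $\hat\eta\in L^{2+\epsilon}_{\mathcal{C}}(P_0)$ with $\rho((\xi-\hat\eta)^2)=\inf_{\eta\in L^{2+\epsilon}_{\mathcal{C}}(P_0)}\rho((\xi-\eta)^2)$. Then for any $\xi\in L^{4+2\epsilon}_{\mathcal{F}}(P_0)$: (i) if $C_1\le\xi\le C_2$ for constants $C_1,C_2$, then $C_1\le\rho(\xi\mid\mathcal{C})\le C_2$; (ii) $\rho(\lambda\xi\mid\mathcal{C})=\lambda\rho(\xi\mid\mathcal{C})$ for every $\lambda\in\mathbb{R}$; (iii) for each $\eta_0\in L^{2+\epsilon}_{\mathcal{C}}(P_0)$, $\rho(\xi+\eta_0\mid\mathcal{C})=\rho(\xi\mid\mathcal{C})+\eta_0$, i.e. $\rho(\xi\mid\mathcal{C})+\eta_0$ is the unique minimizer of $\eta\mapsto\rho((\xi+\eta_0-\eta)^2)$ over $L^{2+\epsilon}_{\mathcal{C}}(P_0)$; (iv) if under each $P\in\mathcal{P}$, $\xi$ is independent of $\mathcal{C}$, then $\rho(\xi\mid\mathcal{C})$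 is a constant.
   Context: A sublinear operator is a map $\rho:L^{2+\epsilon}_{\mathcal{F}}(\Omega,P_0)\to\mathbb{R}$ that is monotone, constant preserving, sub-additive and positively homogeneous. Its representation set $\mathcal{P}$ is the family of all linear expectations (identified with probability measures $P$) dominated by $\rho$, so $\rho(\xi)=\max_{P\in\mathcal{P}}E_P[\xi]$; $\rho((\xi-\eta)^2)$ means $\sup_{P\in\mathcal{P}}E_P[(\xi-\eta)^2]$. Write $f^P=dP/dP_0$, $\mathcal{D}=\{f^P:P\in\mathcal{P}\}$. $\rho$ is proper if every $P\in\mathcal{P}$ is equivalent to $P_0$. Standing assumption: $\mathcal{D}$ is norm-bounded in $L^{1+\frac{2}{\epsilon}}_{\mathcal{F}}(P_0)$ and $\sigma(L^{1+\frac{2}{\epsilon}}(P_0),L^{1+\frac{\epsilon}{2}}(P_0))$-compact. $\rho$ is stable if for each $P\in\mathcal{P}$ the random variable $f^P/E_{P_0}[f^P\mid\mathcal{C}]$ lies in $\mathcal{D}$. $L^{2+\epsilon}_{\mathcal{C}}(P_0)$ denotes the $\mathcal{C}$-measurable elements of $L^{2+\epsilon}(P_0)$. *)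

theory Defs
  imports "HOL-Probability.Probability"
begin

text \<open>Random variables are real functions on the sample space; L^p classes are represented
  by their (measurable) representatives. All order relations between random variables
  are understood P0-almost surely.\<close>

definition Lp :: "'a measure \<Rightarrow> real \<Rightarrow> ('a \<Rightarrow> real) set" where
  "Lp M p = {X. X \<in> borel_measurable M \<and> integrable M (\<lambda>x. \<bar>X x\<bar> powr p)}"

definition Lp_sub :: "'a measure \<Rightarrow> 'a measure \<Rightarrow> real \<Rightarrow> ('a \<Rightarrow> real) set" where
  "Lp_sub M C p = {X. X \<in> Lp M p \<and> X \<in> borel_measurable C}"

definition Lp_norm :: "'a measure \<Rightarrow> real \<Rightarrow> ('a \<Rightarrow> real) \<Rightarrow> real" where
  "Lp_norm M p X = (integral\<^sup>L M (\<lambda>x. \<bar>X x\<bar> powr p)) powr (1 / p)"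

definition sublinear_op :: "'a measure \<Rightarrow> real \<Rightarrow> (('a \<Rightarrow> real) \<Rightarrow> real) \<Rightarrow> bool" where
  "sublinear_op M eps \<rho> \<longleftrightarrow>
     (\<forall>X\<in>Lp M (2+eps). \<forall>Y\<in>Lp M (2+eps). (AE x in M. X x \<le> Y x) \<longrightarrow> \<rho> X \<le> \<rho> Y) \<and>
     (\<forall>c. \<rho> (\<lambda>_. c) = c) \<and>
     (\<forall>X\<in>Lp M (2+eps). \<forall>Y\<in>Lp M (2+eps). \<rho> (\<lambda>x. X x + Y x) \<le> \<rho> X + \<rho> Y) \<and>
     (\<forall>X\<in>Lp M (2+eps). \<forall>l::real. l \<ge> 0 \<longrightarrow> \<rho> (\<lambda>x. l * X x) = l * \<rho> X)"

text \<open>The set D of densities f^P = dP/dP0 of the probability measures P in the representation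
  set: linear expectations on L^(2+eps) dominated by rho.\<close>
definition dens :: "'a measure \<Rightarrow> real \<Rightarrow> (('a \<Rightarrow> real) \<Rightarrow> real) \<Rightarrow> ('a \<Rightarrow> real) set" where
  "dens M eps \<rho> = {f. f \<in> borel_measurable M \<and> (AE x in M. 0 \<le> f x) \<and> integrable M f \<and>
      integral\<^sup>L M f = 1 \<and>
      (\<forall>X\<in>Lp M (2+eps). integrable M (\<lambda>x. f x * X x) \<and> integral\<^sup>L M (\<lambda>x. f x * X x) \<le> \<rho> X)}"

definition dens_meas :: "'a measure \<Rightarrow> ('a \<Rightarrow> real) \<Rightarrow> 'a measure" where
  "dens_meas M f = density M (\<lambda>x. ennreal (f x))"

definition rho_ext :: "'a measure \<Rightarrow> real \<Rightarrow> (('a \<Rightarrow> real) \<Rightarrow> real) \<Rightarrow> ('a \<Rightarrow> real) \<Rightarrow> real" where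
  "rho_ext M eps \<rho> X = (SUP f\<in>dens M eps \<rho>. integral\<^sup>L M (\<lambda>x. f x * X x))"

text \<open>Weak topology sigma(L^p, L^q) on L^p (initial topology of f \<mapsto> E[f g], g in L^q).\<close>
definition weak_top :: "'a measure \<Rightarrow> real \<Rightarrow> real \<Rightarrow> ('a \<Rightarrow> real) topology" where
  "weak_top M p q = pullback_topology (Lp M p)
     (\<lambda>f g. if g \<in> Lp M q then integral\<^sup>L M (\<lambda>x. f x * g x) else 0)
     (product_topology (\<lambda>_. euclideanreal) UNIV)"

definition standing_assm :: "'a measure \<Rightarrow> real \<Rightarrow> (('a \<Rightarrow> real) \<Rightarrow> real) \<Rightarrow> bool" where
  "standing_assm M eps \<rho> \<longleftrightarrow>
     dens M eps \<rho> \<subseteq> Lp M (1 + 2/eps) \<and>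
     (\<exists>B. \<forall>f\<in>dens M eps \<rho>. Lp_norm M (1 + 2/eps) f \<le> B) \<and>
     compactin (weak_top M (1 + 2/eps) (1 + eps/2)) (dens M eps \<rho>)"

definition stable :: "'a measure \<Rightarrow> 'a measure \<Rightarrow> real \<Rightarrow> (('a \<Rightarrow> real) \<Rightarrow> real) \<Rightarrow> bool" where
  "stable M C eps \<rho> \<longleftrightarrow>
     (\<forall>f\<in>dens M eps \<rho>. (\<lambda>x. f x / real_cond_exp M C f x) \<in> dens M eps \<rho>)"

text \<open>Proper: every P in the representation set is equivalent to P0, i.e. f^P > 0 P0-a.s.\<close>
definition proper :: "'a measure \<Rightarrow> real \<Rightarrow> (('a \<Rightarrow> real) \<Rightarrow> real) \<Rightarrow> bool" where
  "proper M eps \<rho> \<longleftrightarrow> (\<forall>f\<in>dens M eps \<rho>. AE x in M. 0 < f x)"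

definition is_cond_min :: "'a measure \<Rightarrow> 'a measure \<Rightarrow> real \<Rightarrow> (('a \<Rightarrow> real) \<Rightarrow> real)
    \<Rightarrow> ('a \<Rightarrow> real) \<Rightarrow> ('a \<Rightarrow> real) \<Rightarrow> bool" where
  "is_cond_min M C eps \<rho> \<xi> \<eta> \<longleftrightarrow> \<eta> \<in> Lp_sub M C (2+eps) \<and>
     rho_ext M eps \<rho> (\<lambda>x. (\<xi> x - \<eta> x)^2) =
       (INF \<zeta>\<in>Lp_sub M C (2+eps). rho_ext M eps \<rho> (\<lambda>x. (\<xi> x - \<zeta> x)^2))"

definition cond_rho :: "'a measure \<Rightarrow> 'a measure \<Rightarrow> real \<Rightarrow> (('a \<Rightarrow> real) \<Rightarrow> real)
    \<Rightarrow> ('a \<Rightarrow> real) \<Rightarrow> ('a \<Rightarrow> real)" where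
  "cond_rho M C eps \<rho> \<xi> = (SOME \<eta>. is_cond_min M C eps \<rho> \<xi> \<eta>)"

end

theory Submission
  imports Defs
begin

lemma Lp_I: "X \<in> borel_measurable M \<Longrightarrow> integrable M (\<lambda>x. \<bar>X x\<bar> powr p) \<Longrightarrow> X \<in> Lp M p"
  by (simp add: Lp_def)
lemma Lp_meas: "X \<in> Lp M p \<Longrightarrow> X \<in> borel_measurable M"
  by (simp add: Lp_def)
lemma Lp_int: "X \<in> Lp M p \<Longrightarrow> integrable M (\<lambda>x. \<bar>X x\<bar> powr p)"
  by (simp add: Lp_def)

lemma Lp_bound:
  assumes "X \<in> Lp M p" "Y \<in> borel_measurable M" "AE x in M. \<bar>Y x\<bar> \<le> \<bar>X x\<bar>" "0 \<le> p"
  shows "Y \<in> Lp M p"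
proof (rule Lp_I[OF assms(2)])
  show "integrable M (\<lambda>x. \<bar>Y x\<bar> powr p)"
  proof (rule Bochner_Integration.integrable_bound[OF Lp_int[OF assms(1)]])
    show "(\<lambda>x. \<bar>Y x\<bar> powr p) \<in> borel_measurable M" using assms(2) by measurable
    show "AE x in M. norm (\<bar>Y x\<bar> powr p) \<le> norm (\<bar>X x\<bar> powr p)"
      using assms(3) by eventually_elim (use assms(4) in \<open>auto intro: powr_mono2\<close>)
  qed
qed

lemma Lp_const:
  assumes "finite_measure M" shows "(\<lambda>_. c) \<in> Lp M p"
  by (rule Lp_I) (auto intro: finite_measure.integrable_const[OF assms])

lemma powr_add_le: 
  fixes a b :: real assumes "0 \<le> p"
  shows "\<bar>a + b\<bar> powr p \<le> 2 powr p * (\<bar>a\<bar> powr p + \<bar>b\<bar> powr p)"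
proof -
  have "\<bar>a + b\<bar> \<le> 2 * max \<bar>a\<bar> \<bar>b\<bar>" by auto
  hence "\<bar>a + b\<bar> powr p \<le> (2 * max \<bar>a\<bar> \<bar>b\<bar>) powr p" using assms by (intro powr_mono2) auto
  also have "\<dots> = 2 powr p * (max \<bar>a\<bar> \<bar>b\<bar>) powr p" by (simp add: powr_mult)
  also have "(max \<bar>a\<bar> \<bar>b\<bar>) powr p \<le> \<bar>a\<bar> powr p + \<bar>b\<bar> powr p"
    by (cases "\<bar>a\<bar> \<le> \<bar>b\<bar>") (auto simp: max_def)
  finally show ?thesis by (simp add: mult_left_mono)
qed

lemma Lp_add:
  assumes "X \<in> Lp M p" "Y \<in> Lp M p" "0 \<le> p"
  shows "(\<lambda>x. X x + Y x) \<in> Lp M p"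
proof (rule Lp_I)
  have [measurable]: "X \<in> borel_measurable M" "Y \<in> borel_measurable M" using assms Lp_meas by auto
  show "(\<lambda>x. X x + Y x) \<in> borel_measurable M" by measurable
  show "integrable M (\<lambda>x. \<bar>X x + Y x\<bar> powr p)"
  proof (rule Bochner_Integration.integrable_bound)
    show "integrable M (\<lambda>x. 2 powr p * (\<bar>X x\<bar> powr p + \<bar>Y x\<bar> powr p))"
      using Lp_int[OF assms(1)] Lp_int[OF assms(2)] by auto
    show "(\<lambda>x. \<bar>X x + Y x\<bar> powr p) \<in> borel_measurable M" by measurable
    show "AE x in M. norm (\<bar>X x + Y x\<bar> powr p) \<le> norm (2 powr p * (\<bar>X x\<bar> powr p + \<bar>Y x\<bar> powr p))"
      using powr_add_le[OF assms(3)] by auto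
  qed
qed

lemma Lp_scale:
  assumes "X \<in> Lp M p" shows "(\<lambda>x. c * X x) \<in> Lp M p"
proof (rule Lp_I)
  have [measurable]: "X \<in> borel_measurable M" using assms Lp_meas by auto
  show "(\<lambda>x. c * X x) \<in> borel_measurable M" by measurable
  have "integrable M (\<lambda>x. \<bar>c\<bar> powr p * \<bar>X x\<bar> powr p)" using Lp_int[OF assms] by auto
  thus "integrable M (\<lambda>x. \<bar>c * X x\<bar> powr p)" by (simp add: abs_mult powr_mult)
qed

lemma Lp_uminus: "X \<in> Lp M p \<Longrightarrow> (\<lambda>x. - X x) \<in> Lp M p"
  using Lp_scale[of X M p "-1"] by simp

lemma Lp_diff:
  assumes "X \<in> Lp M p" "Y \<in> Lp M p" "0 \<le> p"
  shows "(\<lambda>x. X x - Y x) \<in> Lp M p"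
  using Lp_add[OF assms(1) Lp_uminus[OF assms(2)] assms(3)] by simp

lemma Lp_mono_exp:
  assumes "finite_measure M" "X \<in> Lp M p'" "0 \<le> p" "p \<le> p'"
  shows "X \<in> Lp M p"
proof (rule Lp_I)
  have [measurable]: "X \<in> borel_measurable M" using assms Lp_meas by auto
  show "X \<in> borel_measurable M" by simp
  show "integrable M (\<lambda>x. \<bar>X x\<bar> powr p)"
  proof (rule Bochner_Integration.integrable_bound)
    show "integrable M (\<lambda>x. 1 + \<bar>X x\<bar> powr p')"
      using Lp_int[OF assms(2)] finite_measure.integrable_const[OF assms(1), of 1] by (intro Bochner_Integration.integrable_add) auto
    show "(\<lambda>x. \<bar>X x\<bar> powr p) \<in> borel_measurable M" by measurable
    have "\<bar>X x\<bar> powr p \<le> 1 + \<bar>X x\<bar> powr p'" for x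
    proof (cases "\<bar>X x\<bar> \<le> 1")
      case True
      hence "\<bar>X x\<bar> powr p \<le> 1 powr p" using assms by (intro powr_mono2) auto
      hence h1: "\<bar>X x\<bar> powr p \<le> 1" by simp
      have h2: "0 \<le> \<bar>X x\<bar> powr p'" by simp
      from h1 h2 show ?thesis by linarith
    next
      case False
      hence "\<bar>X x\<bar> powr p \<le> \<bar>X x\<bar> powr p'" using assms by (intro powr_mono) auto
      thus ?thesis by auto
    qed
    thus "AE x in M. norm (\<bar>X x\<bar> powr p) \<le> norm (1 + \<bar>X x\<bar> powr p')" by auto
  qed
qed

lemma Young_gen:
  fixes x y :: real
  assumes "0 < a" "0 < b" "0 < c" "1/a + 1/b = 1/c"
  shows "\<bar>x * y\<bar> powr c \<le> (c/a) * \<bar>x\<bar> powr a + (c/b) * \<bar>y\<bar> powr b"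
proof -
  have sum1: "c/a + c/b = 1"
  proof -
    have "c * (1/a + 1/b) = c * (1/c)" using assms(4) by simp
    thus ?thesis using assms(3) by (simp add: distrib_left)
  qed
  have pa: "0 < c/a" "0 < c/b" using assms by auto
  have ca: "c/a < 1" "c/b < 1" using sum1 pa by linarith+
  have "\<bar>x\<bar> powr c * \<bar>y\<bar> powr c \<le> (\<bar>x\<bar> powr c) powr (a/c) / (a/c) + (\<bar>y\<bar> powr c) powr (b/c) / (b/c)"
  proof (rule Youngs_inequality)
    show "1 < a/c" using ca(1) pa(1) assms(1,3) by (simp add: divide_less_eq_1 less_divide_eq_1)
    show "1 < b/c" using ca(2) pa(2) assms(2,3) by (simp add: divide_less_eq_1 less_divide_eq_1)
    show "1 / (a / c) + 1 / (b / c) = 1" using sum1 by simp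
  qed auto
  also have "\<dots> = (c/a) * \<bar>x\<bar> powr a + (c/b) * \<bar>y\<bar> powr b"
    using assms by (simp add: powr_powr mult.commute)
  finally show ?thesis by (simp add: abs_mult powr_mult)
qed

lemma Lp_mult:
  assumes "X \<in> Lp M a" "Y \<in> Lp M b" "0 < a" "0 < b" "0 < c" "1/a + 1/b = 1/c"
  shows "(\<lambda>x. X x * Y x) \<in> Lp M c"
proof (rule Lp_I)
  have [measurable]: "X \<in> borel_measurable M" "Y \<in> borel_measurable M" using assms Lp_meas by auto
  show "(\<lambda>x. X x * Y x) \<in> borel_measurable M" by measurable
  show "integrable M (\<lambda>x. \<bar>X x * Y x\<bar> powr c)"
  proof (rule Bochner_Integration.integrable_bound)
    show "integrable M (\<lambda>x. (c/a) * \<bar>X x\<bar> powr a + (c/b) * \<bar>Y x\<bar> powr b)"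
      using Lp_int[OF assms(1)] Lp_int[OF assms(2)] by auto
    show "(\<lambda>x. \<bar>X x * Y x\<bar> powr c) \<in> borel_measurable M" by measurable
    show "AE x in M. norm (\<bar>X x * Y x\<bar> powr c) \<le> norm ((c/a) * \<bar>X x\<bar> powr a + (c/b) * \<bar>Y x\<bar> powr b)"
      using Young_gen[OF assms(3-6)] assms(3-5) by auto
  qed
qed

lemma Lp_one_integrable: "X \<in> Lp M 1 \<longleftrightarrow> integrable M X"
  unfolding Lp_def by (auto simp: integrable_abs_iff)

lemma Lp_abs_powr:
  assumes "X \<in> Lp M a" "0 < k"
  shows "(\<lambda>x. \<bar>X x\<bar> powr k) \<in> Lp M (a/k)"
proof (rule Lp_I)
  have [measurable]: "X \<in> borel_measurable M" using assms Lp_meas by auto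
  show "(\<lambda>x. \<bar>X x\<bar> powr k) \<in> borel_measurable M" by measurable
  show "integrable M (\<lambda>x. \<bar>\<bar>X x\<bar> powr k\<bar> powr (a / k))"
    using Lp_int[OF assms(1)] assms by (simp add: powr_powr)
qed

lemma Lp_sq:
  assumes "X \<in> Lp M a" 
  shows "(\<lambda>x. (X x)\<^sup>2) \<in> Lp M (a/2)"
proof -
  have "(\<lambda>x. \<bar>X x\<bar> powr 2) \<in> Lp M (a/2)" by (rule Lp_abs_powr[OF assms]) auto
  moreover have "\<bar>X x\<bar> powr 2 = (X x)\<^sup>2" for x
    by (cases "X x = 0") (auto simp: powr_numeral)
  ultimately show ?thesis by simp
qed

locale sett =
  fixes M C :: "'a measure" and eps :: real and \<rho> :: "('a \<Rightarrow> real) \<Rightarrow> real"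
  assumes prob: "prob_space M" and eps0: "0 < eps" and eps1: "eps < 1"
    and subalg: "subalgebra M C"
    and subl: "sublinear_op M eps \<rho>"
    and stand: "standing_assm M eps \<rho>"
    and stab: "stable M C eps \<rho>" and propr: "proper M eps \<rho>"
begin

abbreviation "D \<equiv> dens M eps \<rho>"
abbreviation "pp \<equiv> 1 + 2/eps"
abbreviation "qq \<equiv> 1 + eps/2"
abbreviation "rr \<equiv> 2 + eps"
abbreviation "F \<equiv> rho_ext M eps \<rho>"

sublocale P: prob_space M by (rule prob)

lemma fin: "finite_measure M" by unfold_locales

lemma pq: "1/pp + 1/qq = 1"
proof -
  have a: "1/pp = eps/(eps+2)" using eps0 by (simp add: field_simps)
  have b: "1/qq = 2/(eps+2)" using eps0 by (simp add: field_simps)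
  show ?thesis unfolding a b using eps0 by (simp add: add_divide_distrib[symmetric])
qed
lemma pp_pos: "0 < pp" and qq_pos: "0 < qq" and rr_pos: "0 < rr" using eps0 by (auto intro: add_pos_pos)

lemma D_Lp: "f \<in> D \<Longrightarrow> f \<in> Lp M pp"
  using stand unfolding standing_assm_def by auto

lemma D_meas[measurable_dest]: "f \<in> D \<Longrightarrow> f \<in> borel_measurable M"
  by (simp add: dens_def)
lemma D_nonneg: "f \<in> D \<Longrightarrow> AE x in M. 0 \<le> f x"
  by (simp add: dens_def)
lemma D_pos: "f \<in> D \<Longrightarrow> AE x in M. 0 < f x"
  using propr by (simp add: proper_def)
lemma D_integrable: "f \<in> D \<Longrightarrow> integrable M f"
  by (simp add: dens_def)
lemma D_int1: "f \<in> D \<Longrightarrow> integral\<^sup>L M f = 1"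
  by (simp add: dens_def)
lemma D_dom: "f \<in> D \<Longrightarrow> X \<in> Lp M rr \<Longrightarrow> integral\<^sup>L M (\<lambda>x. f x * X x) \<le> \<rho> X"
  by (simp add: dens_def)
lemma D_domI: "f \<in> D \<Longrightarrow> X \<in> Lp M rr \<Longrightarrow> integrable M (\<lambda>x. f x * X x)"
  by (simp add: dens_def)

definition KD where "KD = (SOME B. \<forall>f\<in>D. Lp_norm M pp f \<le> B)"

lemma KD: "f \<in> D \<Longrightarrow> Lp_norm M pp f \<le> KD"
proof -
  have "\<exists>B. \<forall>f\<in>D. Lp_norm M pp f \<le> B" using stand unfolding standing_assm_def by auto
  from someI_ex[OF this] show "f \<in> D \<Longrightarrow> Lp_norm M pp f \<le> KD" unfolding KD_def by auto
qed

lemma D_pnorm: 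
  assumes "f \<in> D" shows "integral\<^sup>L M (\<lambda>x. \<bar>f x\<bar> powr pp) \<le> (max KD 0) powr pp"
proof -
  let ?I = "integral\<^sup>L M (\<lambda>x. \<bar>f x\<bar> powr pp)"
  have I0: "0 \<le> ?I" by simp
  have "Lp_norm M pp f = ?I powr (1/pp)" by (simp add: Lp_norm_def)
  hence "?I = (Lp_norm M pp f) powr pp" using I0 pp_pos by (simp add: powr_powr)
  also have "\<dots> \<le> (max KD 0) powr pp"
    using KD[OF assms] pp_pos by (intro powr_mono2) (auto simp: Lp_norm_def)
  finally show ?thesis .
qed

definition KK where "KK = (max KD 0) powr pp / pp"

lemma D_Lq_int:
  assumes "f \<in> D" "Y \<in> Lp M qq"
  shows "integrable M (\<lambda>x. f x * Y x)"
proof -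
  have "(\<lambda>x. f x * Y x) \<in> Lp M 1"
    by (rule Lp_mult[OF D_Lp[OF assms(1)] assms(2) pp_pos qq_pos]) (use pq in auto)
  thus ?thesis by (simp add: Lp_one_integrable)
qed

lemma D_Lq_bound:
  assumes "f \<in> D" "Y \<in> Lp M qq"
  shows "\<bar>integral\<^sup>L M (\<lambda>x. f x * Y x)\<bar> \<le> KK + integral\<^sup>L M (\<lambda>x. \<bar>Y x\<bar> powr qq) / qq"
proof -
  have [measurable]: "f \<in> borel_measurable M" "Y \<in> borel_measurable M"
    using assms D_meas Lp_meas by auto
  have yo: "\<bar>f x * Y x\<bar> \<le> \<bar>f x\<bar> powr pp / pp + \<bar>Y x\<bar> powr qq / qq" for x
    using Young_gen[of pp qq 1 "f x" "Y x"] pq pp_pos qq_pos by auto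
  have "\<bar>integral\<^sup>L M (\<lambda>x. f x * Y x)\<bar> \<le> integral\<^sup>L M (\<lambda>x. \<bar>f x * Y x\<bar>)"
    by (rule integral_abs_bound)
  also have "\<dots> \<le> integral\<^sup>L M (\<lambda>x. \<bar>f x\<bar> powr pp / pp + \<bar>Y x\<bar> powr qq / qq)"
    using yo Lp_int[OF D_Lp[OF assms(1)]] Lp_int[OF assms(2)] D_Lq_int[OF assms]
    by (intro integral_mono) auto
  also have "\<dots> = integral\<^sup>L M (\<lambda>x. \<bar>f x\<bar> powr pp) / pp + integral\<^sup>L M (\<lambda>x. \<bar>Y x\<bar> powr qq) / qq"
    using Lp_int[OF D_Lp[OF assms(1)]] Lp_int[OF assms(2)] by simp
  also have "\<dots> \<le> KK + integral\<^sup>L M (\<lambda>x. \<bar>Y x\<bar> powr qq) / qq"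
    using D_pnorm[OF assms(1)] pp_pos unfolding KK_def by (simp add: divide_right_mono)
  finally show ?thesis .
qed

lemma bdd_D: "Y \<in> Lp M qq \<Longrightarrow> bdd_above ((\<lambda>f. integral\<^sup>L M (\<lambda>x. f x * Y x)) ` D)"
  using D_Lq_bound by (intro bdd_aboveI[where M = "KK + integral\<^sup>L M (\<lambda>x. \<bar>Y x\<bar> powr qq) / qq"]) 
    (auto simp: abs_le_iff)

lemma cont_proj:
  assumes "Y \<in> Lp M qq"
  shows "continuous_map (weak_top M pp qq) euclideanreal (\<lambda>f. integral\<^sup>L M (\<lambda>x. f x * Y x))"
proof -
  have "continuous_map (weak_top M pp qq) euclideanreal
     ((\<lambda>h. h Y) \<circ> (\<lambda>f g. if g \<in> Lp M qq then integral\<^sup>L M (\<lambda>x. f x * g x) else 0))"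
    unfolding weak_top_def
    by (intro continuous_map_pullback continuous_map_product_projection) auto
  moreover have "((\<lambda>h. h Y) \<circ> (\<lambda>f g. if g \<in> Lp M qq then integral\<^sup>L M (\<lambda>x. f x * g x) else 0))
     = (\<lambda>f. integral\<^sup>L M (\<lambda>x. f x * Y x))" using assms by auto
  ultimately show ?thesis by simp
qed

lemma D_compact: "compactin (weak_top M pp qq) D"
  using stand unfolding standing_assm_def by auto

lemma F_def2: "F Y = (SUP f\<in>D. integral\<^sup>L M (\<lambda>x. f x * Y x))"
  by (simp add: rho_ext_def)

lemma F_ge: "Y \<in> Lp M qq \<Longrightarrow> f \<in> D \<Longrightarrow> integral\<^sup>L M (\<lambda>x. f x * Y x) \<le> F Y"
  unfolding F_def2 by (rule cSUP_upper[OF _ bdd_D])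

lemma F_attain:
  assumes "Y \<in> Lp M qq" "D \<noteq> {}"
  shows "\<exists>f\<in>D. integral\<^sup>L M (\<lambda>x. f x * Y x) = F Y"
proof -
  let ?g = "\<lambda>f. integral\<^sup>L M (\<lambda>x. f x * Y x)"
  have "compactin euclideanreal (?g ` D)"
    by (rule image_compactin[OF D_compact cont_proj[OF assms(1)]])
  hence "compact (?g ` D)" by simp
  then obtain s where s: "s \<in> ?g ` D" "\<forall>t \<in> ?g ` D. t \<le> s"
    using compact_attains_sup[of "?g ` D"] assms(2) by blast
  then obtain f where f: "f \<in> D" "s = ?g f" by auto
  have "F Y = s" unfolding F_def2 using s by (intro cSup_eq_maximum) auto
  thus ?thesis using f by auto
qed

lemma F_least:
  assumes "D \<noteq> {}" "\<And>f. f \<in> D \<Longrightarrow> integral\<^sup>L M (\<lambda>x. f x * Y x) \<le> c"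
  shows "F Y \<le> c"
  unfolding F_def2 using assms by (intro cSUP_least) auto

lemma F_mono:
  assumes "D \<noteq> {}" "Y \<in> Lp M qq" "Z \<in> Lp M qq" "AE x in M. Y x \<le> Z x"
  shows "F Y \<le> F Z"
proof (rule F_least[OF assms(1)])
  fix f assume f: "f \<in> D"
  have "integral\<^sup>L M (\<lambda>x. f x * Y x) \<le> integral\<^sup>L M (\<lambda>x. f x * Z x)"
  proof (intro integral_mono_AE)
    show "AE x in M. f x * Y x \<le> f x * Z x"
      using D_nonneg[OF f] assms(4) by eventually_elim (simp add: mult_left_mono)
  qed (use D_Lq_int[OF f assms(2)] D_Lq_int[OF f assms(3)] in auto)
  also have "\<dots> \<le> F Z" by (rule F_ge[OF assms(3) f])
  finally show "integral\<^sup>L M (\<lambda>x. f x * Y x) \<le> F Z" .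
qed

lemma F_nonneg:
  assumes "D \<noteq> {}" "Y \<in> Lp M qq" "AE x in M. 0 \<le> Y x"
  shows "0 \<le> F Y"
proof -
  obtain f where f: "f \<in> D" using assms by auto
  have "0 \<le> integral\<^sup>L M (\<lambda>x. f x * Y x)"
  proof (intro integral_nonneg_AE)
    show "AE x in M. 0 \<le> f x * Y x"
      using D_nonneg[OF f] assms(3) by eventually_elim simp
  qed
  also have "\<dots> \<le> F Y" by (rule F_ge[OF assms(2) f])
  finally show ?thesis .
qed

end

context sett begin

abbreviation "Lsub \<equiv> Lp_sub M C rr"

lemma rr_qq: "rr/2 = qq" by simp

lemma Lsub_Lp: "\<eta> \<in> Lsub \<Longrightarrow> \<eta> \<in> Lp M rr" by (simp add: Lp_sub_def)
lemma Lsub_measC: "\<eta> \<in> Lsub \<Longrightarrow> \<eta> \<in> borel_measurable C" by (simp add: Lp_sub_def)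
lemma Lsub_I: "\<eta> \<in> Lp M rr \<Longrightarrow> \<eta> \<in> borel_measurable C \<Longrightarrow> \<eta> \<in> Lsub" by (simp add: Lp_sub_def)

lemma measC_M: "g \<in> borel_measurable C \<Longrightarrow> g \<in> borel_measurable M"
  using subalg by (rule measurable_from_subalg)

lemma Lsub_add: "\<eta> \<in> Lsub \<Longrightarrow> \<zeta> \<in> Lsub \<Longrightarrow> (\<lambda>x. \<eta> x + \<zeta> x) \<in> Lsub"
  apply (rule Lsub_I)
   apply (rule Lp_add, erule Lsub_Lp, erule Lsub_Lp, use eps0 in simp)
  using Lsub_measC by measurable
lemma Lsub_diff: "\<eta> \<in> Lsub \<Longrightarrow> \<zeta> \<in> Lsub \<Longrightarrow> (\<lambda>x. \<eta> x - \<zeta> x) \<in> Lsub"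
  apply (rule Lsub_I)
   apply (rule Lp_diff, erule Lsub_Lp, erule Lsub_Lp, use eps0 in simp)
  using Lsub_measC by measurable
lemma Lsub_scale: "\<eta> \<in> Lsub \<Longrightarrow> (\<lambda>x. c * \<eta> x) \<in> Lsub"
  apply (rule Lsub_I)
   apply (rule Lp_scale, erule Lsub_Lp)
  using Lsub_measC by measurable
lemma Lsub_const: "(\<lambda>x. c) \<in> Lsub"
  by (rule Lsub_I[OF Lp_const[OF fin]]) simp

lemma sqLq: "\<xi> \<in> Lp M rr \<Longrightarrow> \<eta> \<in> Lp M rr \<Longrightarrow> (\<lambda>x. (\<xi> x - \<eta> x)\<^sup>2) \<in> Lp M qq"
  using Lp_sq[OF Lp_diff[of \<xi> M rr \<eta>]] eps0 by (simp add: rr_qq)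

lemma sqLq1: "\<eta> \<in> Lp M rr \<Longrightarrow> (\<lambda>x. (\<eta> x)\<^sup>2) \<in> Lp M qq"
  using Lp_sq[of \<eta> M rr] by (simp add: rr_qq)

lemma F_sq_nonneg: "D \<noteq> {} \<Longrightarrow> \<xi> \<in> Lp M rr \<Longrightarrow> \<eta> \<in> Lp M rr \<Longrightarrow> 0 \<le> F (\<lambda>x. (\<xi> x - \<eta> x)\<^sup>2)"
  by (rule F_nonneg) (auto simp: sqLq)

lemma cond_min_le:
  assumes "D \<noteq> {}" "\<xi> \<in> Lp M rr" "is_cond_min M C eps \<rho> \<xi> \<eta>" "\<zeta> \<in> Lsub"
  shows "F (\<lambda>x. (\<xi> x - \<eta> x)\<^sup>2) \<le> F (\<lambda>x. (\<xi> x - \<zeta> x)\<^sup>2)"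
proof -
  have "F (\<lambda>x. (\<xi> x - \<eta> x)\<^sup>2) = (INF \<zeta>\<in>Lsub. F (\<lambda>x. (\<xi> x - \<zeta> x)\<^sup>2))"
    using assms(3) by (simp add: is_cond_min_def)
  also have "\<dots> \<le> F (\<lambda>x. (\<xi> x - \<zeta> x)\<^sup>2)"
    using assms(1,2,4) F_sq_nonneg Lsub_Lp by (intro cINF_lower bdd_belowI2[where m=0]) auto
  finally show ?thesis .
qed

lemma cond_minI:
  assumes "\<eta> \<in> Lsub" "\<And>\<zeta>. \<zeta> \<in> Lsub \<Longrightarrow> F (\<lambda>x. (\<xi> x - \<eta> x)\<^sup>2) \<le> F (\<lambda>x. (\<xi> x - \<zeta> x)\<^sup>2)"
  shows "is_cond_min M C eps \<rho> \<xi> \<eta>"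
proof -
  have "F (\<lambda>x. (\<xi> x - \<eta> x)\<^sup>2) = (INF \<zeta>\<in>Lsub. F (\<lambda>x. (\<xi> x - \<zeta> x)\<^sup>2))"
  proof (rule antisym)
    show "F (\<lambda>x. (\<xi> x - \<eta> x)\<^sup>2) \<le> (INF \<zeta>\<in>Lsub. F (\<lambda>x. (\<xi> x - \<zeta> x)\<^sup>2))"
      using assms by (intro cINF_greatest) auto
    show "(INF \<zeta>\<in>Lsub. F (\<lambda>x. (\<xi> x - \<zeta> x)\<^sup>2)) \<le> F (\<lambda>x. (\<xi> x - \<eta> x)\<^sup>2)"
      using assms by (intro cINF_lower bdd_belowI2[where m="F (\<lambda>x. (\<xi> x - \<eta> x)\<^sup>2)"]) auto
  qed
  thus ?thesis using assms(1) by (simp add: is_cond_min_def)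
qed

lemma cond_min_unique:
  assumes ne: "D \<noteq> {}" and xi: "\<xi> \<in> Lp M rr"
    and m1: "is_cond_min M C eps \<rho> \<xi> \<eta>1" and m2: "is_cond_min M C eps \<rho> \<xi> \<eta>2"
  shows "AE x in M. \<eta>1 x = \<eta>2 x"
proof -
  have e1: "\<eta>1 \<in> Lsub" and e2: "\<eta>2 \<in> Lsub" using m1 m2 by (auto simp: is_cond_min_def)
  define m where "m = (\<lambda>x. (1/2) * (\<eta>1 x + \<eta>2 x))"
  have mL: "m \<in> Lsub" unfolding m_def by (intro Lsub_scale Lsub_add e1 e2)
  have [measurable]: "\<xi> \<in> borel_measurable M" using xi Lp_meas by auto
  have [measurable]: "\<eta>1 \<in> borel_measurable M" "\<eta>2 \<in> borel_measurable M"
    using e1 e2 Lsub_Lp Lp_meas by blast+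
  have q1: "(\<lambda>x. (\<xi> x - \<eta>1 x)\<^sup>2) \<in> Lp M qq" and q2: "(\<lambda>x. (\<xi> x - \<eta>2 x)\<^sup>2) \<in> Lp M qq"
    and qm: "(\<lambda>x. (\<xi> x - m x)\<^sup>2) \<in> Lp M qq" and qd: "(\<lambda>x. (\<eta>1 x - \<eta>2 x)\<^sup>2) \<in> Lp M qq"
    using sqLq xi e1 e2 mL Lsub_Lp by auto
  obtain f where f: "f \<in> D" and fm: "integral\<^sup>L M (\<lambda>x. f x * (\<xi> x - m x)\<^sup>2) = F (\<lambda>x. (\<xi> x - m x)\<^sup>2)"
    using F_attain[OF qm ne] by auto
  have [measurable]: "f \<in> borel_measurable M" using f by auto
  let ?I = "F (\<lambda>x. (\<xi> x - \<eta>1 x)\<^sup>2)"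
  have I2: "F (\<lambda>x. (\<xi> x - \<eta>2 x)\<^sup>2) = ?I"
    using cond_min_le[OF ne xi m1 e2] cond_min_le[OF ne xi m2 e1] by auto
  have Im: "?I \<le> F (\<lambda>x. (\<xi> x - m x)\<^sup>2)" by (rule cond_min_le[OF ne xi m1 mL])
  have pw: "f x * (\<xi> x - m x)\<^sup>2 = (1/2) * (f x * (\<xi> x - \<eta>1 x)\<^sup>2) + (1/2) * (f x * (\<xi> x - \<eta>2 x)\<^sup>2)
            - (1/4) * (f x * (\<eta>1 x - \<eta>2 x)\<^sup>2)" for x
    unfolding m_def by (simp add: power2_eq_square algebra_simps)
  have i1: "integrable M (\<lambda>x. f x * (\<xi> x - \<eta>1 x)\<^sup>2)" using D_Lq_int[OF f q1] .
  have i2: "integrable M (\<lambda>x. f x * (\<xi> x - \<eta>2 x)\<^sup>2)" using D_Lq_int[OF f q2] .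
  have id: "integrable M (\<lambda>x. f x * (\<eta>1 x - \<eta>2 x)\<^sup>2)" using D_Lq_int[OF f qd] .
  have "integral\<^sup>L M (\<lambda>x. f x * (\<xi> x - m x)\<^sup>2) = (1/2) * integral\<^sup>L M (\<lambda>x. f x * (\<xi> x - \<eta>1 x)\<^sup>2)
     + (1/2) * integral\<^sup>L M (\<lambda>x. f x * (\<xi> x - \<eta>2 x)\<^sup>2) - (1/4) * integral\<^sup>L M (\<lambda>x. f x * (\<eta>1 x - \<eta>2 x)\<^sup>2)"
    unfolding pw using i1 i2 id by simp
  also have "\<dots> \<le> (1/2) * ?I + (1/2) * ?I - (1/4) * integral\<^sup>L M (\<lambda>x. f x * (\<eta>1 x - \<eta>2 x)\<^sup>2)"
    using F_ge[OF q1 f] F_ge[OF q2 f] I2 by simp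
  finally have "integral\<^sup>L M (\<lambda>x. f x * (\<eta>1 x - \<eta>2 x)\<^sup>2) \<le> 0" using Im fm by simp
  moreover have nn: "AE x in M. 0 \<le> f x * (\<eta>1 x - \<eta>2 x)\<^sup>2"
    using D_nonneg[OF f] by eventually_elim simp
  moreover have "0 \<le> integral\<^sup>L M (\<lambda>x. f x * (\<eta>1 x - \<eta>2 x)\<^sup>2)"
    using nn by (rule integral_nonneg_AE)
  ultimately have "integral\<^sup>L M (\<lambda>x. f x * (\<eta>1 x - \<eta>2 x)\<^sup>2) = 0" by simp
  hence "AE x in M. f x * (\<eta>1 x - \<eta>2 x)\<^sup>2 = 0"
    using integral_nonneg_eq_0_iff_AE[OF id nn] by simp
  thus ?thesis using D_pos[OF f] by eventually_elim simp
qed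

end

context sett begin

sublocale CE: sigma_finite_subalgebra M C
proof -
  interpret finite_measure_subalgebra M C
    by unfold_locales (rule subalg)
  show "sigma_finite_subalgebra M C" by unfold_locales
qed

definition cf where "cf f = real_cond_exp M C f"
definition nf where "nf f = (\<lambda>x. f x / cf f x)"

lemma cf_measC[measurable]: "cf f \<in> borel_measurable C" unfolding cf_def by simp
lemma cf_meas[measurable]: "cf f \<in> borel_measurable M" unfolding cf_def by simp

lemma nf_D: "f \<in> D \<Longrightarrow> nf f \<in> D"
  using stab unfolding stable_def nf_def cf_def by auto

lemma cf_pos:
  assumes f: "f \<in> D" shows "AE x in M. 0 < cf f x"
proof -
  have [measurable]: "f \<in> borel_measurable M" using f by simp
  define A where "A = {x \<in> space M. cf f x \<le> 0}"
  have sp: "space C = space M" using subalg by (simp add: subalgebra_def)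
  have "A = {x \<in> space C. cf f x \<le> 0}" using sp by (simp add: A_def)
  also have "\<dots> \<in> sets C" by measurable
  finally have AC[measurable]: "A \<in> sets C" .
  have AM[measurable]: "A \<in> sets M" using AC CE.subalg by (meson subalgebra_def subsetD)
  have ind[measurable]: "indicator A \<in> borel_measurable C" using AC by simp
  have i1: "integrable M (\<lambda>x. indicator A x * f x)"
    using integrable_real_mult_indicator[OF AM D_integrable[OF f]] by (simp add: mult.commute)
  have eq: "(\<integral>x. indicator A x * cf f x \<partial>M) = (\<integral>x. indicator A x * f x \<partial>M)"
    unfolding cf_def by (rule CE.real_cond_exp_intg(2)[OF i1]) auto
  have "(\<integral>x. indicator A x * cf f x \<partial>M) \<le> 0"
  proof -
    have "(\<integral>x. - (indicator A x * cf f x) \<partial>M) \<ge> 0"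
      by (rule integral_nonneg_AE) (auto simp: A_def indicator_def)
    moreover have "(\<integral>x. - (indicator A x * cf f x) \<partial>M) = - (\<integral>x. indicator A x * cf f x \<partial>M)"
      by (rule Bochner_Integration.integral_minus)
    ultimately show ?thesis by linarith
  qed
  hence le: "(\<integral>x. indicator A x * f x \<partial>M) \<le> 0" using eq by simp
  have nn: "AE x in M. 0 \<le> indicator A x * f x"
    using D_nonneg[OF f] by eventually_elim (simp add: indicator_def)
  have "(\<integral>x. indicator A x * f x \<partial>M) = 0" using le integral_nonneg_AE[OF nn] by simp
  hence "AE x in M. indicator A x * f x = 0" using integral_nonneg_eq_0_iff_AE[OF i1 nn] by simp
  thus ?thesis using D_pos[OF f] AE_space
    by eventually_elim (auto simp: A_def indicator_def split: if_splits)
qed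

lemma f_eq: assumes "f \<in> D" shows "AE x in M. f x = cf f x * nf f x"
  using cf_pos[OF assms] by eventually_elim (simp add: nf_def)

lemma nf_ce1:
  assumes f: "f \<in> D" shows "AE x in M. real_cond_exp M C (nf f) x = 1"
proof -
  have [measurable]: "f \<in> borel_measurable M" using f by simp
  have "integrable M (nf f)" using nf_D[OF f] D_integrable by blast
  moreover have "nf f = (\<lambda>x. (1 / cf f x) * f x)" unfolding nf_def by auto
  ultimately have i: "integrable M (\<lambda>x. (1 / cf f x) * f x)" by simp
  have "AE x in M. real_cond_exp M C (\<lambda>x. (1 / cf f x) * f x) x = (1 / cf f x) * real_cond_exp M C f x"
    by (rule CE.real_cond_exp_mult) (use i in auto)
  moreover note cf_pos[OF f]
  ultimately show ?thesis unfolding \<open>nf f = _\<close> by eventually_elim (simp add: cf_def)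
qed

definition normd where "normd h \<longleftrightarrow> h \<in> D \<and> (AE x in M. real_cond_exp M C h x = 1)"

lemma normd_nf: "f \<in> D \<Longrightarrow> normd (nf f)"
  using nf_D nf_ce1 by (simp add: normd_def)

lemma normd_int:
  assumes h: "normd h" and g[measurable]: "g \<in> borel_measurable C"
    and i: "integrable M (\<lambda>x. h x * g x)"
  shows "integrable M g" "integral\<^sup>L M (\<lambda>x. h x * g x) = integral\<^sup>L M g"
proof -
  have hD: "h \<in> D" and h1: "AE x in M. real_cond_exp M C h x = 1" using h by (auto simp: normd_def)
  have [measurable]: "h \<in> borel_measurable M" using hD by simp
  have gM[measurable]: "g \<in> borel_measurable M" using measC_M[OF g] .
  have i': "integrable M (\<lambda>x. g x * h x)" using i by (simp add: mult.commute)
  have a: "integrable M (\<lambda>x. g x * real_cond_exp M C h x)"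
    and b: "(\<integral>x. g x * real_cond_exp M C h x \<partial>M) = (\<integral>x. g x * h x \<partial>M)"
    using CE.real_cond_exp_intg[OF i'] by auto
  have ae: "AE x in M. g x * real_cond_exp M C h x = g x" using h1 by eventually_elim simp
  show "integrable M g" using integrable_cong_AE_imp[OF a gM ae] .
  have "(\<integral>x. g x * real_cond_exp M C h x \<partial>M) = integral\<^sup>L M g"
    by (rule integral_cong_AE) (use ae in auto)
  thus "integral\<^sup>L M (\<lambda>x. h x * g x) = integral\<^sup>L M g" using b by (simp add: mult.commute)
qed

end

lemma integrable_inc_bound:
  fixes g :: "nat \<Rightarrow> 'a \<Rightarrow> real"
  assumes i: "\<And>n. integrable M (g n)" and inc: "\<And>x. x \<in> space M \<Longrightarrow> incseq (\<lambda>n. g n x)"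
    and lim: "\<And>x. x \<in> space M \<Longrightarrow> (\<lambda>n. g n x) \<longlonglongrightarrow> u x"
    and u: "u \<in> borel_measurable M" and b: "\<And>n. integral\<^sup>L M (g n) \<le> A"
  shows "integrable M u" "integral\<^sup>L M u \<le> A"
proof -
  have mono_int: "incseq (\<lambda>n. integral\<^sup>L M (g n))"
    using inc i by (auto simp: incseq_def intro!: integral_mono)
  have bdd: "bdd_above (range (\<lambda>n. integral\<^sup>L M (g n)))" using b by (intro bdd_aboveI[where M=A]) auto
  have L: "(\<lambda>n. integral\<^sup>L M (g n)) \<longlonglongrightarrow> (SUP n. integral\<^sup>L M (g n))"
    by (rule LIMSEQ_incseq_SUP[OF bdd mono_int])
  have mono: "AE x in M. mono (\<lambda>n. g n x)" using inc by (auto simp: incseq_def mono_def)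
  have lim': "AE x in M. (\<lambda>n. g n x) \<longlonglongrightarrow> u x" using lim by auto
  show "integrable M u" by (rule integrable_monotone_convergence[OF i mono lim' L u])
  have "integral\<^sup>L M u = (SUP n. integral\<^sup>L M (g n))"
    by (rule integral_monotone_convergence[OF i mono lim' L u])
  also have "\<dots> \<le> A" using b by (intro cSUP_least) auto
  finally show "integral\<^sup>L M u \<le> A" .
qed

context sett begin

abbreviation "ss \<equiv> 4 + 2*eps"

lemma ss_rr: "ss = 2 * rr" by simp

lemma Lss_Lq: "\<xi> \<in> Lp M ss \<Longrightarrow> \<xi> \<in> Lp M qq"
  by (rule Lp_mono_exp[OF fin]) (use eps0 in auto)
lemma Lss_Lr: "\<xi> \<in> Lp M ss \<Longrightarrow> \<xi> \<in> Lp M rr"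
  by (rule Lp_mono_exp[OF fin]) (use eps0 in auto)

definition mu where "mu h \<xi> = real_cond_exp M C (\<lambda>x. h x * \<xi> x)"

lemma mu_measC[measurable]: "mu h \<xi> \<in> borel_measurable C" unfolding mu_def by simp
lemma mu_meas[measurable]: "mu h \<xi> \<in> borel_measurable M" unfolding mu_def by simp

lemma mu_Lr:
  assumes h: "normd h" and xi: "\<xi> \<in> Lp M ss"
  shows "mu h \<xi> \<in> Lp M rr"
proof -
  have hD: "h \<in> D" using h by (simp add: normd_def)
  have [measurable]: "h \<in> borel_measurable M" "\<xi> \<in> borel_measurable M"
    using hD xi Lp_meas by auto
  define Y where "Y = mu h \<xi>"
  have [measurable]: "Y \<in> borel_measurable C" "Y \<in> borel_measurable M" unfolding Y_def by simp_all
  define bb where "bb = (2 + eps) / (1 + eps)"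
  have bb: "1 / rr + 1 / bb = 1 / 1" "0 < bb" using eps0 by (auto simp: bb_def field_simps)
  have hxi: "integrable M (\<lambda>x. h x * \<xi> x)" by (rule D_Lq_int[OF hD Lss_Lq[OF xi]])
  have xr: "(\<lambda>x. \<bar>\<xi> x\<bar> powr rr) \<in> Lp M qq"
  proof -
    have "(\<lambda>x. \<bar>\<xi> x\<bar> powr rr) \<in> Lp M (ss / rr)" by (rule Lp_abs_powr[OF xi rr_pos])
    moreover have "ss / rr = 2" using eps0 by (simp add: field_simps)
    ultimately have "(\<lambda>x. \<bar>\<xi> x\<bar> powr rr) \<in> Lp M 2" by simp
    thus ?thesis by (rule Lp_mono_exp[OF fin]) (use eps1 eps0 in auto)
  qed
  define A where "A = integral\<^sup>L M (\<lambda>x. h x * \<bar>\<xi> x\<bar> powr rr)"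
  have iA: "integrable M (\<lambda>x. h x * \<bar>\<xi> x\<bar> powr rr)" by (rule D_Lq_int[OF hD xr])
  define t where "t = (\<lambda>(K::nat) x. min \<bar>Y x\<bar> (real K))"
  define g where "g = (\<lambda>K x. sgn (Y x) * t K x powr (1 + eps))"
  have t_meas[measurable]: "t K \<in> borel_measurable C" for K unfolding t_def by simp
  have g_meas[measurable]: "g K \<in> borel_measurable C" for K unfolding g_def by simp
  have t_measM[measurable]: "t K \<in> borel_measurable M" for K using measC_M[OF t_meas] .
  have g_measM[measurable]: "g K \<in> borel_measurable M" for K using measC_M[OF g_meas] .
  have t_nn: "0 \<le> t K x" for K x unfolding t_def by simp
  have t_le: "t K x \<le> real K" for K x unfolding t_def by simp
  have g_abs: "\<bar>g K x\<bar> = t K x powr (1 + eps)" for K x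
    unfolding g_def by (cases "Y x = 0") (auto simp: abs_mult t_def)
  have g_bd: "\<bar>g K x\<bar> \<le> real K powr (1 + eps)" for K x
    unfolding g_abs using t_nn t_le eps0 by (intro powr_mono2) auto
  have S_bound: "integral\<^sup>L M (\<lambda>x. t K x powr rr) \<le> A" for K
  proof -
    have i1: "integrable M (\<lambda>x. g K x * (h x * \<xi> x))"
      by (rule Bochner_Integration.integrable_bound[where f="\<lambda>x. real K powr (1+eps) * (h x * \<xi> x)"])
        (use hxi g_bd in \<open>auto simp: abs_mult intro!: mult_right_mono\<close>)
    have e1: "integral\<^sup>L M (\<lambda>x. g K x * Y x) = integral\<^sup>L M (\<lambda>x. g K x * (h x * \<xi> x))"
      and iY: "integrable M (\<lambda>x. g K x * Y x)"
      unfolding Y_def mu_def using CE.real_cond_exp_intg[OF i1] by auto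
    have it: "integrable M (\<lambda>x. t K x powr rr)"
      by (rule Bochner_Integration.integrable_bound[where f="\<lambda>x. real K powr rr"])
        (use t_nn t_le eps0 in \<open>auto intro!: powr_mono2\<close>)
    have iht: "integrable M (\<lambda>x. h x * t K x powr rr)"
      by (rule Bochner_Integration.integrable_bound[where f="\<lambda>x. h x * real K powr rr"])
        (use D_integrable[OF hD] D_nonneg[OF hD] t_nn t_le eps0 in \<open>auto simp: abs_mult intro!: mult_left_mono powr_mono2 elim!: eventually_mono\<close>)
    have e2: "integral\<^sup>L M (\<lambda>x. h x * t K x powr rr) = integral\<^sup>L M (\<lambda>x. t K x powr rr)"
      using normd_int(2)[OF h _ iht] by simp
    have pw1: "t K x powr rr \<le> g K x * Y x" for x
    proof -
      have "g K x * Y x = \<bar>Y x\<bar> * t K x powr (1 + eps)"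
        unfolding g_def by (cases "Y x > 0"; cases "Y x < 0") auto
      moreover have "t K x * t K x powr (1 + eps) \<le> \<bar>Y x\<bar> * t K x powr (1 + eps)"
        using t_nn by (intro mult_right_mono) (auto simp: t_def)
      moreover have "t K x * t K x powr (1 + eps) = t K x powr rr"
      proof -
        have "t K x powr rr = t K x powr 1 * t K x powr (1 + eps)"
          by (subst powr_add[symmetric]) simp
        thus ?thesis using t_nn by simp
      qed
      ultimately show ?thesis by simp
    qed
    have pw2: "\<bar>\<xi> x\<bar> * \<bar>g K x\<bar> \<le> (1/rr) * \<bar>\<xi> x\<bar> powr rr + (1/bb) * t K x powr rr" for x
    proof -
      have "\<bar>\<xi> x * g K x\<bar> powr 1 \<le> (1/rr) * \<bar>\<xi> x\<bar> powr rr + (1/bb) * \<bar>g K x\<bar> powr bb"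
        using Young_gen[OF rr_pos bb(2) _ bb(1)] by simp
      moreover have "\<bar>g K x\<bar> powr bb = t K x powr rr"
        unfolding g_abs using t_nn eps0 by (simp add: powr_powr bb_def)
      ultimately show ?thesis by (simp add: abs_mult)
    qed
    have "integral\<^sup>L M (\<lambda>x. t K x powr rr) \<le> integral\<^sup>L M (\<lambda>x. g K x * Y x)"
      by (rule integral_mono[OF it iY pw1])
    also have "\<dots> = integral\<^sup>L M (\<lambda>x. g K x * (h x * \<xi> x))" by (rule e1)
    also have "\<dots> \<le> integral\<^sup>L M (\<lambda>x. (1/rr) * (h x * \<bar>\<xi> x\<bar> powr rr) + (1/bb) * (h x * t K x powr rr))"
    proof (rule integral_mono_AE[OF i1])
      show "integrable M (\<lambda>x. (1/rr) * (h x * \<bar>\<xi> x\<bar> powr rr) + (1/bb) * (h x * t K x powr rr))"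
        using iA iht by simp
      show "AE x in M. g K x * (h x * \<xi> x) \<le> (1/rr) * (h x * \<bar>\<xi> x\<bar> powr rr) + (1/bb) * (h x * t K x powr rr)"
        using D_nonneg[OF hD]
      proof eventually_elim
        case (elim x)
        have "g K x * (h x * \<xi> x) \<le> h x * (\<bar>\<xi> x\<bar> * \<bar>g K x\<bar>)"
          proof -
          have "g K x * (h x * \<xi> x) \<le> \<bar>g K x * (h x * \<xi> x)\<bar>" by simp
          also have "\<dots> = h x * (\<bar>\<xi> x\<bar> * \<bar>g K x\<bar>)" using elim by (simp add: abs_mult)
          finally show ?thesis .
        qed
        also have "\<dots> \<le> h x * ((1/rr) * \<bar>\<xi> x\<bar> powr rr + (1/bb) * t K x powr rr)"
          using elim pw2[of x] by (intro mult_left_mono) auto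
        finally show ?case by (simp add: algebra_simps)
      qed
    qed
    also have "\<dots> = (1/rr) * A + (1/bb) * integral\<^sup>L M (\<lambda>x. t K x powr rr)"
      using iA iht e2 by (simp add: A_def)
    finally have "integral\<^sup>L M (\<lambda>x. t K x powr rr) \<le> (1/rr) * A + (1/bb) * integral\<^sup>L M (\<lambda>x. t K x powr rr)" .
    moreover have "1/bb = 1 - 1/rr" using bb(1) by simp
    ultimately have "integral\<^sup>L M (\<lambda>x. t K x powr rr) \<le> (1/rr) * A + (1 - 1/rr) * integral\<^sup>L M (\<lambda>x. t K x powr rr)"
      by simp
    also have "\<dots> = (1/rr) * A + integral\<^sup>L M (\<lambda>x. t K x powr rr) - (1/rr) * integral\<^sup>L M (\<lambda>x. t K x powr rr)"
      by (simp add: left_diff_distrib)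
    finally have "(1/rr) * integral\<^sup>L M (\<lambda>x. t K x powr rr) \<le> (1/rr) * A" by linarith
    thus ?thesis using rr_pos by (simp add: divide_le_cancel)
  qed
  have "integrable M (\<lambda>x. \<bar>Y x\<bar> powr rr)"
  proof (rule integrable_inc_bound[where g="\<lambda>K x. t K x powr rr" and A=A])
    show "integrable M (\<lambda>x. t K x powr rr)" for K
      by (rule Bochner_Integration.integrable_bound[where f="\<lambda>x. real K powr rr"])
        (use t_nn t_le eps0 in \<open>auto intro!: powr_mono2\<close>)
    show "incseq (\<lambda>n. t n x powr rr)" for x
      unfolding incseq_def t_def using eps0 by (auto intro!: powr_mono2)
    show "(\<lambda>n. t n x powr rr) \<longlonglongrightarrow> \<bar>Y x\<bar> powr rr" for x
    proof -
      have ev: "eventually (\<lambda>n. t n x powr rr = \<bar>Y x\<bar> powr rr) sequentially"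
      proof -
        obtain N :: nat where "\<bar>Y x\<bar> \<le> real N" using real_arch_simple by blast
        hence "\<forall>n\<ge>N. t n x = \<bar>Y x\<bar>" unfolding t_def by auto
        thus ?thesis unfolding eventually_sequentially by (intro exI[of _ N]) simp
      qed
      show ?thesis by (rule tendsto_eventually) (use ev in \<open>auto elim: eventually_mono\<close>)
    qed
  qed (use S_bound in auto)
  thus ?thesis unfolding Y_def by (intro Lp_I) auto
qed

end

context sett begin

lemma ar1: "(eps::real) > 0 \<Longrightarrow> 1/(4+2*eps) + 1/(2+eps) = 1/((4+2*eps)/3)"
  by (simp add: divide_simps) 
lemma ar2: "(eps::real) > 0 \<Longrightarrow> 1/(1+2/eps) + 1/((4+2*eps)/3) = 1/((4 + 2*eps) / (2*eps + 3))" 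
  by (simp add: divide_simps) (simp add: algebra_simps)
lemma ar3: "(eps::real) > 0 \<Longrightarrow> 1 \<le> (4 + 2*eps) / (2*eps + 3)" 
  by simp

lemma int3:
  assumes f: "f \<in> Lp M pp" and xi: "\<xi> \<in> Lp M ss" and g: "g \<in> Lp M rr"
  shows "integrable M (\<lambda>x. f x * (\<xi> x * g x))"
proof -
  have a: "(\<lambda>x. \<xi> x * g x) \<in> Lp M ((4+2*eps)/3)"
    by (rule Lp_mult[OF xi g _ rr_pos _ ar1[OF eps0]]) (use eps0 in simp_all)
  have "(\<lambda>x. f x * (\<xi> x * g x)) \<in> Lp M ((4 + 2*eps) / (2*eps + 3))"
    by (rule Lp_mult[OF f a pp_pos _ _ ar2[OF eps0]]) (use eps0 in simp_all)
  hence "(\<lambda>x. f x * (\<xi> x * g x)) \<in> Lp M 1" 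
    by (rule Lp_mono_exp[OF fin _ _ ar3[OF eps0]]) simp
  thus ?thesis by (simp add: Lp_one_integrable)
qed

lemma mu_Lsub: "f \<in> D \<Longrightarrow> \<xi> \<in> Lp M ss \<Longrightarrow> mu (nf f) \<xi> \<in> Lsub"
  by (intro Lsub_I mu_Lr normd_nf) auto

definition Phi where "Phi f \<xi> \<eta> = integral\<^sup>L M (\<lambda>x. f x * (\<xi> x - \<eta> x)\<^sup>2)"

lemma Phi_int: "f \<in> D \<Longrightarrow> \<xi> \<in> Lp M rr \<Longrightarrow> \<eta> \<in> Lp M rr \<Longrightarrow> integrable M (\<lambda>x. f x * (\<xi> x - \<eta> x)\<^sup>2)"
  by (rule D_Lq_int) (auto simp: sqLq)

lemma Phi_nonneg: assumes "f \<in> D" shows "0 \<le> Phi f \<xi> \<eta>"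
  unfolding Phi_def by (rule integral_nonneg_AE) (use D_nonneg[OF assms] in \<open>auto elim!: eventually_mono\<close>)

lemma pyth:
  assumes f: "f \<in> D" and xi: "\<xi> \<in> Lp M ss" and eta: "\<eta> \<in> Lsub"
  shows "Phi f \<xi> \<eta> = Phi f \<xi> (mu (nf f) \<xi>) + Phi f (mu (nf f) \<xi>) \<eta>"
proof -
  define h where "h = nf f"
  define c where "c = cf f"
  define m where "m = mu h \<xi>"
  have hn: "normd h" unfolding h_def by (rule normd_nf[OF f])
  have hD: "h \<in> D" using hn by (simp add: normd_def)
  have mL: "m \<in> Lsub" unfolding m_def h_def by (rule mu_Lsub[OF f xi])
  have [measurable]: "f \<in> borel_measurable M" "h \<in> borel_measurable M" "\<xi> \<in> borel_measurable M"
    "\<eta> \<in> borel_measurable M" "m \<in> borel_measurable M" "c \<in> borel_measurable M"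
    using f hD xi eta mL Lp_meas Lsub_Lp by (auto simp: c_def)
  have [measurable]: "m \<in> borel_measurable C" "\<eta> \<in> borel_measurable C" "c \<in> borel_measurable C"
    using mL eta Lsub_measC by (auto simp: c_def)
  have xir: "\<xi> \<in> Lp M rr" by (rule Lss_Lr[OF xi])
  have mr: "m \<in> Lp M rr" and er: "\<eta> \<in> Lp M rr" using mL eta Lsub_Lp by auto
  have fp: "f \<in> Lp M pp" by (rule D_Lp[OF f])
  define k where "k = (\<lambda>x. c x * (m x - \<eta> x))"
  have [measurable]: "k \<in> borel_measurable C" unfolding k_def by measurable
  have [measurable]: "k \<in> borel_measurable M" unfolding k_def by measurable
  have fe: "AE x in M. f x = c x * h x" using f_eq[OF f] by (simp add: c_def h_def)
  have mer: "(\<lambda>x. m x - \<eta> x) \<in> Lp M rr" using Lp_diff[OF mr er] eps0 by simp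
  have iT1f: "integrable M (\<lambda>x. f x * (\<xi> x * (m x - \<eta> x)))" by (rule int3[OF fp xi mer])
  have ae1: "AE x in M. f x * (\<xi> x * (m x - \<eta> x)) = k x * (h x * \<xi> x)"
    using fe by eventually_elim (simp add: k_def)
  have iT1: "integrable M (\<lambda>x. k x * (h x * \<xi> x))"
    by (rule integrable_cong_AE_imp[OF iT1f _ ae1]) measurable
  have cT1: "integral\<^sup>L M (\<lambda>x. k x * m x) = integral\<^sup>L M (\<lambda>x. k x * (h x * \<xi> x))"
    unfolding m_def mu_def using CE.real_cond_exp_intg(2)[OF iT1] by simp
  have mm: "(\<lambda>x. m x * (m x - \<eta> x)) \<in> Lp M qq"
  proof -
    have "(\<lambda>x. m x * (m x - \<eta> x)) \<in> Lp M (rr/2)"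
      by (rule Lp_mult[OF mr mer rr_pos rr_pos]) (use eps0 in auto)
    thus ?thesis by (simp only: rr_qq)
  qed
  have iT2f: "integrable M (\<lambda>x. f x * (m x * (m x - \<eta> x)))" by (rule D_Lq_int[OF f mm])
  have ae2: "AE x in M. f x * (m x * (m x - \<eta> x)) = h x * (m x * k x)"
    using fe by eventually_elim (simp add: k_def)
  have iT2: "integrable M (\<lambda>x. h x * (m x * k x))"
    by (rule integrable_cong_AE_imp[OF iT2f _ ae2]) measurable
  have cT2: "integral\<^sup>L M (\<lambda>x. h x * (m x * k x)) = integral\<^sup>L M (\<lambda>x. m x * k x)"
    by (rule normd_int(2)[OF hn _ iT2]) measurable
  have cross_eq: "AE x in M. f x * ((\<xi> x - m x) * (m x - \<eta> x)) = k x * (h x * \<xi> x) - h x * (m x * k x)"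
    using fe by eventually_elim (simp add: k_def algebra_simps)
  have icross: "integrable M (\<lambda>x. f x * ((\<xi> x - m x) * (m x - \<eta> x)))"
  proof -
    have "integrable M (\<lambda>x. f x * (\<xi> x * (m x - \<eta> x)) - f x * (m x * (m x - \<eta> x)))"
      using iT1f iT2f by simp
    thus ?thesis by (simp add: algebra_simps)
  qed
  have cross: "integral\<^sup>L M (\<lambda>x. f x * ((\<xi> x - m x) * (m x - \<eta> x))) = 0"
  proof -
    have "integral\<^sup>L M (\<lambda>x. f x * ((\<xi> x - m x) * (m x - \<eta> x)))
        = integral\<^sup>L M (\<lambda>x. k x * (h x * \<xi> x) - h x * (m x * k x))"
      by (rule integral_cong_AE[OF _ _ cross_eq]) measurable
    also have "\<dots> = integral\<^sup>L M (\<lambda>x. k x * (h x * \<xi> x)) - integral\<^sup>L M (\<lambda>x. h x * (m x * k x))"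
      using iT1 iT2 by simp
    also have "\<dots> = 0" using cT1 cT2 by (simp add: mult.commute)
    finally show ?thesis .
  qed
  have i1: "integrable M (\<lambda>x. f x * (\<xi> x - m x)\<^sup>2)" by (rule Phi_int[OF f xir mr])
  have i2: "integrable M (\<lambda>x. f x * (m x - \<eta> x)\<^sup>2)" by (rule Phi_int[OF f mr er])
  have pw: "f x * (\<xi> x - \<eta> x)\<^sup>2 = f x * (\<xi> x - m x)\<^sup>2 + f x * (m x - \<eta> x)\<^sup>2
      + 2 * (f x * ((\<xi> x - m x) * (m x - \<eta> x)))" for x
    by (simp add: power2_eq_square algebra_simps)
  have "Phi f \<xi> \<eta> = integral\<^sup>L M (\<lambda>x. f x * (\<xi> x - m x)\<^sup>2) + integral\<^sup>L M (\<lambda>x. f x * (m x - \<eta> x)\<^sup>2)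
      + 2 * integral\<^sup>L M (\<lambda>x. f x * ((\<xi> x - m x) * (m x - \<eta> x)))"
    unfolding Phi_def pw using i1 i2 icross by simp
  thus ?thesis using cross unfolding Phi_def m_def h_def by simp
qed

end

lemma AE_tendsto0_of_int_bound:
  fixes a :: "nat \<Rightarrow> 'a \<Rightarrow> real"
  assumes meas: "\<And>k. a k \<in> borel_measurable M" and i: "\<And>k. integrable M (a k)"
    and nn: "\<And>k. AE x in M. 0 \<le> a k x"
    and b: "\<And>k. integral\<^sup>L M (a k) \<le> c * (1/2)^k"
  shows "AE x in M. (\<lambda>k. a k x) \<longlonglongrightarrow> 0"
proof -
  have nn': "AE x in M. \<forall>k. 0 \<le> a k x" using nn by (simp add: AE_all_countable)
  have "(\<integral>\<^sup>+ x. (\<Sum>k. ennreal (a k x)) \<partial>M) = (\<Sum>k. \<integral>\<^sup>+ x. ennreal (a k x) \<partial>M)"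
    by (rule nn_integral_suminf) (use meas in auto)
  also have "\<dots> = (\<Sum>k. ennreal (integral\<^sup>L M (a k)))"
    using nn_integral_eq_integral[OF i nn] by simp
  also have "\<dots> \<le> (\<Sum>k. ennreal (c * (1/2)^k))"
    using b by (intro suminf_le summableI) (auto intro: ennreal_leI)
  finally have le: "(\<integral>\<^sup>+ x. (\<Sum>k. ennreal (a k x)) \<partial>M) \<le> (\<Sum>k. ennreal (c * (1/2)^k))" .
  have "(\<Sum>k. ennreal (c * (1/2)^k)) \<noteq> \<top>"
  proof (rule ennreal_suminf_neq_top)
    show "summable (\<lambda>k. c * (1/2::real)^k)" by (intro summable_mult summable_geometric) simp
    have "0 \<le> c"
    proof -
      have "0 \<le> integral\<^sup>L M (a 0)" using nn[of 0] by (rule integral_nonneg_AE)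
      thus ?thesis using b[of 0] by simp
    qed
    thus "\<And>k. 0 \<le> c * (1/2::real)^k" by simp
  qed
  with le have fin: "(\<integral>\<^sup>+ x. (\<Sum>k. ennreal (a k x)) \<partial>M) \<noteq> \<infinity>"
    by (metis infinity_ennreal_def top.extremum_uniqueI)
  have "AE x in M. (\<Sum>k. ennreal (a k x)) \<noteq> \<infinity>"
    by (rule nn_integral_noteq_infinite[OF _ fin]) (use meas in auto)
  with nn' show ?thesis
  proof eventually_elim
    case (elim x)
    hence "summable (\<lambda>k. a k x)" by (intro summable_suminf_not_top) auto
    thus ?case by (rule summable_LIMSEQ_zero)
  qed
qed

context sett begin

lemma D_convex:
  assumes f: "f \<in> D" and g: "g \<in> D" and t: "0 \<le> t" "t \<le> 1"
  shows "(\<lambda>x. (1 - t) * f x + t * g x) \<in> D"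
proof -
  have [measurable]: "f \<in> borel_measurable M" "g \<in> borel_measurable M" using f g by auto
  have if_: "integrable M f" "integrable M g" using f g D_integrable by auto
  show ?thesis unfolding dens_def
  proof (intro CollectI conjI ballI)
    show "(\<lambda>x. (1 - t) * f x + t * g x) \<in> borel_measurable M" by measurable
    show "AE x in M. 0 \<le> (1 - t) * f x + t * g x"
      using D_nonneg[OF f] D_nonneg[OF g] by eventually_elim (use t in auto)
    show "integrable M (\<lambda>x. (1 - t) * f x + t * g x)" using if_ by simp
    show "integral\<^sup>L M (\<lambda>x. (1 - t) * f x + t * g x) = 1"
      using if_ D_int1[OF f] D_int1[OF g] by simp
    fix X assume X: "X \<in> Lp M rr"
    have i1: "integrable M (\<lambda>x. f x * X x)" "integrable M (\<lambda>x. g x * X x)"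
      using D_domI[OF f X] D_domI[OF g X] .
    have eq: "(\<lambda>x. ((1 - t) * f x + t * g x) * X x) = (\<lambda>x. (1 - t) * (f x * X x) + t * (g x * X x))"
      by (auto simp: algebra_simps)
    show "integrable M (\<lambda>x. ((1 - t) * f x + t * g x) * X x)" unfolding eq using i1 by simp
    have "integral\<^sup>L M (\<lambda>x. ((1 - t) * f x + t * g x) * X x)
        = (1 - t) * integral\<^sup>L M (\<lambda>x. f x * X x) + t * integral\<^sup>L M (\<lambda>x. g x * X x)"
      unfolding eq using i1 by simp
    also have "\<dots> \<le> (1 - t) * \<rho> X + t * \<rho> X"
      using D_dom[OF f X] D_dom[OF g X] t by (intro add_mono mult_left_mono) auto
    finally show "integral\<^sup>L M (\<lambda>x. ((1 - t) * f x + t * g x) * X x) \<le> \<rho> X" by (simp add: algebra_simps)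
  qed
qed

lemma Phi_mix:
  assumes f: "f \<in> D" and g: "g \<in> D" and xi: "\<xi> \<in> Lp M rr" and eta: "\<eta> \<in> Lp M rr"
  shows "Phi (\<lambda>x. (1 - t) * f x + t * g x) \<xi> \<eta> = (1 - t) * Phi f \<xi> \<eta> + t * Phi g \<xi> \<eta>"
proof -
  have i1: "integrable M (\<lambda>x. f x * (\<xi> x - \<eta> x)\<^sup>2)" "integrable M (\<lambda>x. g x * (\<xi> x - \<eta> x)\<^sup>2)"
    using Phi_int[OF f xi eta] Phi_int[OF g xi eta] .
  have eq: "(\<lambda>x. ((1 - t) * f x + t * g x) * (\<xi> x - \<eta> x)\<^sup>2)
     = (\<lambda>x. (1 - t) * (f x * (\<xi> x - \<eta> x)\<^sup>2) + t * (g x * (\<xi> x - \<eta> x)\<^sup>2))"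
    by (auto simp: algebra_simps)
  show ?thesis unfolding Phi_def eq using i1 by simp
qed

end

context sett begin

definition W where "W \<xi> f = Phi f \<xi> (mu (nf f) \<xi>)"

lemma W_le: "f \<in> D \<Longrightarrow> \<xi> \<in> Lp M ss \<Longrightarrow> \<eta> \<in> Lsub \<Longrightarrow> W \<xi> f \<le> Phi f \<xi> \<eta>"
  unfolding W_def using pyth[of f \<xi> \<eta>] Phi_nonneg[of f] by simp

lemma W_bdd:
  assumes xi: "\<xi> \<in> Lp M ss" shows "bdd_above (W \<xi> ` D)"
proof (rule bdd_aboveI2)
  fix f assume f: "f \<in> D"
  have z: "(\<lambda>x. 0::real) \<in> Lsub" by (rule Lsub_const)
  have Y: "(\<lambda>x. (\<xi> x - 0)\<^sup>2) \<in> Lp M qq" by (rule sqLq[OF Lss_Lr[OF xi] Lsub_Lp[OF z]])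
  have "W \<xi> f \<le> Phi f \<xi> (\<lambda>x. 0)" by (rule W_le[OF f xi z])
  also have "\<dots> \<le> \<bar>Phi f \<xi> (\<lambda>x. 0)\<bar>" by simp
  also have "\<dots> \<le> KK + integral\<^sup>L M (\<lambda>x. \<bar>(\<xi> x - 0)\<^sup>2\<bar> powr qq) / qq"
    unfolding Phi_def by (rule D_Lq_bound[OF f Y])
  finally show "W \<xi> f \<le> KK + integral\<^sup>L M (\<lambda>x. \<bar>(\<xi> x - 0)\<^sup>2\<bar> powr qq) / qq" .
qed

lemma W_attain:
  assumes xi: "\<xi> \<in> Lp M ss" and ne: "D \<noteq> {}"
  shows "\<exists>fs\<in>D. \<forall>f\<in>D. W \<xi> f \<le> W \<xi> fs"
proof (rule ccontr)
  assume H: "\<not> (\<exists>fs\<in>D. \<forall>f\<in>D. W \<xi> f \<le> W \<xi> fs)"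
  define s where "s = (SUP f\<in>D. W \<xi> f)"
  have up: "W \<xi> f \<le> s" if "f \<in> D" for f
    unfolding s_def by (rule cSUP_upper[OF that W_bdd[OF xi]])
  have lt: "W \<xi> g < s" if g: "g \<in> D" for g
  proof -
    obtain f where "f \<in> D" "W \<xi> g < W \<xi> f" using H g by (meson not_le)
    thus ?thesis using up[of f] by simp
  qed
  define T where "T = weak_top M pp qq"
  define V where "V = (\<lambda>(\<eta>, n::nat). {f \<in> topspace T. Phi f \<xi> \<eta> \<in> {..< s - 1 / real (Suc n)}})"
  have op: "openin T (V z)" if "z \<in> Lsub \<times> UNIV" for z
  proof -
    obtain \<eta> n where z: "z = (\<eta>, n)" by (cases z)
    have e: "\<eta> \<in> Lsub" using that z by auto
    have Y: "(\<lambda>x. (\<xi> x - \<eta> x)\<^sup>2) \<in> Lp M qq" by (rule sqLq[OF Lss_Lr[OF xi] Lsub_Lp[OF e]])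
    have "openin T {f \<in> topspace T. integral\<^sup>L M (\<lambda>x. f x * (\<xi> x - \<eta> x)\<^sup>2) \<in> {..< s - 1 / real (Suc n)}}"
      unfolding T_def by (rule openin_continuous_map_preimage[OF cont_proj[OF Y]]) simp
    thus ?thesis by (simp add: V_def z Phi_def)
  qed
  have cover: "D \<subseteq> \<Union>(V ` (Lsub \<times> UNIV))"
  proof
    fix g assume g: "g \<in> D"
    have gT: "g \<in> topspace T" using D_compact g unfolding T_def by (meson compactin_subset_topspace subsetD)
    have "0 < s - W \<xi> g" using lt[OF g] by simp
    then obtain n where n: "inverse (real (Suc n)) < s - W \<xi> g" using reals_Archimedean by blast
    have "Phi g \<xi> (mu (nf g) \<xi>) < s - 1 / real (Suc n)" using n unfolding W_def inverse_eq_divide by linarith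
    hence "g \<in> V (mu (nf g) \<xi>, n)" using gT unfolding V_def by simp
    moreover have "(mu (nf g) \<xi>, n) \<in> Lsub \<times> UNIV" using mu_Lsub[OF g xi] by simp
    ultimately show "g \<in> \<Union>(V ` (Lsub \<times> UNIV))" by blast
  qed
  obtain Fn where Fn: "finite Fn" "Fn \<subseteq> V ` (Lsub \<times> UNIV)" "D \<subseteq> \<Union>Fn"
  proof -
    have o: "\<forall>B\<in>V ` (Lsub \<times> UNIV). openin T B" using op by blast
    have cpt: "\<forall>U. (\<forall>B\<in>U. openin T B) \<and> D \<subseteq> \<Union>U \<longrightarrow> (\<exists>F. finite F \<and> F \<subseteq> U \<and> D \<subseteq> \<Union>F)"
      using D_compact unfolding T_def by (simp add: compactin_def)
    from cpt[rule_format, of "V ` (Lsub \<times> UNIV)"] o cover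
    obtain F where "finite F" "F \<subseteq> V ` (Lsub \<times> UNIV)" "D \<subseteq> \<Union>F" by blast
    thus ?thesis by (rule that)
  qed
  obtain G where G: "G \<subseteq> Lsub \<times> UNIV" "finite G" "Fn = V ` G"
    using finite_subset_image[OF Fn(1) Fn(2)] by blast
  define N where "N = Max (snd ` G)"
  have bnd: "W \<xi> f \<le> s - 1 / real (Suc N)" if f: "f \<in> D" for f
  proof -
    obtain z where z: "z \<in> G" "f \<in> V z" using Fn(3) G(3) f by auto
    obtain \<eta> n where zz: "z = (\<eta>, n)" by (cases z)
    have e: "\<eta> \<in> Lsub" using G(1) z(1) zz by auto
    have nN: "n \<le> N" unfolding N_def using G(2) z(1) zz by (intro Max_ge) force+
    have "W \<xi> f \<le> Phi f \<xi> \<eta>" by (rule W_le[OF f xi e])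
    also have "\<dots> < s - 1 / real (Suc n)" using z(2) zz by (simp add: V_def)
    also have "\<dots> \<le> s - 1 / real (Suc N)" using nN by (intro diff_left_mono divide_left_mono) auto
    finally show ?thesis by simp
  qed
  have "s \<le> s - 1 / real (Suc N)" unfolding s_def using bnd ne by (intro cSUP_least) (auto simp: s_def)
  thus False by simp
qed

end

context sett begin

lemma danskin_step:
  assumes xi: "\<xi> \<in> Lp M ss" and fs: "fs \<in> D" and mx: "\<forall>g\<in>D. W \<xi> g \<le> W \<xi> fs"
    and f: "f \<in> D"
  shows "\<exists>\<eta>\<in>Lsub. Phi fs (mu (nf fs) \<xi>) \<eta> \<le> W \<xi> fs * (1/2)^k \<and> Phi f \<xi> \<eta> \<le> W \<xi> fs"
proof -
  define t :: real where "t = (1/2)^(Suc k)"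
  have t0: "0 < t" and t1: "t \<le> 1/2" unfolding t_def by (auto simp: power_le_one)
  define ft where "ft = (\<lambda>x. (1 - t) * fs x + t * f x)"
  have ftD: "ft \<in> D" unfolding ft_def by (rule D_convex[OF fs f]) (use t0 t1 in auto)
  define \<eta> where "\<eta> = mu (nf ft) \<xi>"
  have eL: "\<eta> \<in> Lsub" unfolding \<eta>_def by (rule mu_Lsub[OF ftD xi])
  define s where "s = W \<xi> fs"
  define e where "e = Phi fs (mu (nf fs) \<xi>) \<eta>"
  define P where "P = Phi f \<xi> \<eta>"
  have e0: "0 \<le> e" unfolding e_def by (rule Phi_nonneg[OF fs])
  have P0: "0 \<le> P" unfolding P_def by (rule Phi_nonneg[OF f])
  have "W \<xi> ft = Phi ft \<xi> \<eta>" by (simp add: W_def \<eta>_def)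
  also have "\<dots> = (1 - t) * Phi fs \<xi> \<eta> + t * P"
    unfolding ft_def P_def by (rule Phi_mix[OF fs f Lss_Lr[OF xi] Lsub_Lp[OF eL]])
  also have "Phi fs \<xi> \<eta> = s + e" unfolding s_def e_def W_def by (rule pyth[OF fs xi eL])
  finally have eq: "W \<xi> ft = (1 - t) * (s + e) + t * P" .
  have "W \<xi> ft \<le> s" using mx ftD by (simp add: s_def)
  hence ineq: "(1 - t) * e + t * P \<le> t * s" using eq by (simp add: algebra_simps)
  have "(1/2) * e \<le> (1 - t) * e" using t1 e0 by (intro mult_right_mono) auto
  hence "(1/2) * e \<le> t * s" proof -
    have "0 \<le> t * P" using t0 P0 by simp
    thus ?thesis using ineq \<open>(1/2) * e \<le> (1 - t) * e\<close> by linarith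
  qed
  hence "e \<le> (2 * t) * s" by simp
  moreover have "2 * t = (1/2)^k" unfolding t_def by simp
  ultimately have E: "e \<le> s * (1/2)^k" by (simp add: mult.commute)
  have "t * P \<le> t * s" proof -
    have "0 \<le> (1 - t) * e" using t1 e0 by simp
    thus ?thesis using ineq by linarith
  qed
  hence "P \<le> s" using t0 by simp
  thus ?thesis using E eL unfolding e_def P_def s_def by blast
qed

lemma exists_min:
  assumes xi: "\<xi> \<in> Lp M ss" and ne: "D \<noteq> {}"
  shows "\<exists>\<eta>. is_cond_min M C eps \<rho> \<xi> \<eta>"
proof -
  obtain fs where fs: "fs \<in> D" and mx: "\<forall>g\<in>D. W \<xi> g \<le> W \<xi> fs" using W_attain[OF xi ne] by blast
  define s where "s = W \<xi> fs"
  define es where "es = mu (nf fs) \<xi>"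
  have esL: "es \<in> Lsub" unfolding es_def by (rule mu_Lsub[OF fs xi])
  have xir: "\<xi> \<in> Lp M rr" by (rule Lss_Lr[OF xi])
  have [measurable]: "\<xi> \<in> borel_measurable M" "es \<in> borel_measurable M" "fs \<in> borel_measurable M"
    using xi esL fs Lp_meas Lsub_Lp by auto
  have s0: "0 \<le> s" unfolding s_def W_def by (rule Phi_nonneg[OF fs])
  have key: "Phi f \<xi> es \<le> s" if f: "f \<in> D" for f
  proof -
    have [measurable]: "f \<in> borel_measurable M" using f by simp
    have "\<forall>k. \<exists>\<eta>. \<eta> \<in> Lsub \<and> Phi fs es \<eta> \<le> s * (1/2)^k \<and> Phi f \<xi> \<eta> \<le> s"
      using danskin_step[OF xi fs mx f] unfolding s_def es_def by blast
    from choice[OF this] obtain ek where ek0: "\<forall>k. ek k \<in> Lsub \<and> Phi fs es (ek k) \<le> s * (1/2)^k \<and> Phi f \<xi> (ek k) \<le> s"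
      by blast
    have ek: "\<And>k. ek k \<in> Lsub" "\<And>k. Phi fs es (ek k) \<le> s * (1/2)^k"
      "\<And>k. Phi f \<xi> (ek k) \<le> s" using ek0 by auto
    have [measurable]: "ek k \<in> borel_measurable M" for k using ek(1) Lsub_Lp Lp_meas by blast
    have "AE x in M. (\<lambda>k. fs x * (es x - ek k x)\<^sup>2) \<longlonglongrightarrow> 0"
    proof (rule AE_tendsto0_of_int_bound)
      show "integrable M (\<lambda>x. fs x * (es x - ek k x)\<^sup>2)" for k
        by (rule Phi_int[OF fs Lsub_Lp[OF esL] Lsub_Lp[OF ek(1)]])
      show "AE x in M. 0 \<le> fs x * (es x - ek k x)\<^sup>2" for k
        using D_nonneg[OF fs] by eventually_elim simp
      show "integral\<^sup>L M (\<lambda>x. fs x * (es x - ek k x)\<^sup>2) \<le> s * (1/2)^k" for k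
        using ek(2)[of k] by (simp add: Phi_def)
    qed measurable
    hence conv: "AE x in M. (\<lambda>k. ek k x) \<longlonglongrightarrow> es x" using D_pos[OF fs]
    proof eventually_elim
      case (elim x)
      have "(\<lambda>k. (fs x * (es x - ek k x)\<^sup>2) / fs x) \<longlonglongrightarrow> 0 / fs x"
        by (rule tendsto_divide[OF elim(1)]) (use elim(2) in auto)
      hence "(\<lambda>k. (es x - ek k x)\<^sup>2) \<longlonglongrightarrow> 0" using elim(2) by simp
      hence "(\<lambda>k. sqrt ((es x - ek k x)\<^sup>2)) \<longlonglongrightarrow> sqrt 0" by (rule tendsto_real_sqrt)
      hence "(\<lambda>k. \<bar>es x - ek k x\<bar>) \<longlonglongrightarrow> 0" by simp
      hence "(\<lambda>k. es x - ek k x) \<longlonglongrightarrow> 0" by (simp add: tendsto_rabs_zero_iff)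
      hence "(\<lambda>k. es x - (es x - ek k x)) \<longlonglongrightarrow> es x - 0" by (intro tendsto_diff) auto
      thus ?case by simp
    qed
    define u where "u = (\<lambda>k x. ennreal (f x * (\<xi> x - ek k x)\<^sup>2))"
    have [measurable]: "u k \<in> borel_measurable M" for k unfolding u_def by measurable
    have lim_u: "AE x in M. liminf (\<lambda>k. u k x) = ennreal (f x * (\<xi> x - es x)\<^sup>2)"
      using conv
    proof eventually_elim
      case (elim x)
      have "(\<lambda>k. f x * (\<xi> x - ek k x)\<^sup>2) \<longlonglongrightarrow> f x * (\<xi> x - es x)\<^sup>2"
        by (intro tendsto_intros elim)
      hence "(\<lambda>k. u k x) \<longlonglongrightarrow> ennreal (f x * (\<xi> x - es x)\<^sup>2)"
        unfolding u_def by (rule tendsto_ennrealI)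
      thus ?case by (intro lim_imp_Liminf) auto
    qed
    have nnI: "integral\<^sup>N M (u k) = ennreal (Phi f \<xi> (ek k))" for k
      unfolding u_def Phi_def
      by (rule nn_integral_eq_integral[OF Phi_int[OF f xir Lsub_Lp[OF ek(1)]]])
        (use D_nonneg[OF f] in \<open>auto elim!: eventually_mono\<close>)
    have "ennreal (Phi f \<xi> es) = (\<integral>\<^sup>+ x. ennreal (f x * (\<xi> x - es x)\<^sup>2) \<partial>M)"
      unfolding Phi_def
      by (rule nn_integral_eq_integral[OF Phi_int[OF f xir Lsub_Lp[OF esL]], symmetric])
        (use D_nonneg[OF f] in \<open>auto elim!: eventually_mono\<close>)
    also have "\<dots> = (\<integral>\<^sup>+ x. liminf (\<lambda>k. u k x) \<partial>M)"
      by (rule nn_integral_cong_AE) (use lim_u in \<open>auto elim!: eventually_mono\<close>)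
    also have "\<dots> \<le> liminf (\<lambda>k. integral\<^sup>N M (u k))" by (rule nn_integral_liminf) simp
    also have "\<dots> \<le> ennreal s"
      by (rule Liminf_le) (auto simp: nnI ek(3) ennreal_leI)
    finally show ?thesis using s0 by simp
  qed
  have "is_cond_min M C eps \<rho> \<xi> es"
  proof (rule cond_minI[OF esL])
    fix \<zeta> assume z: "\<zeta> \<in> Lsub"
    have "F (\<lambda>x. (\<xi> x - es x)\<^sup>2) \<le> s"
      by (rule F_least[OF ne]) (use key in \<open>simp add: Phi_def\<close>)
    also have "s \<le> Phi fs \<xi> \<zeta>" unfolding s_def by (rule W_le[OF fs xi z])
    also have "\<dots> \<le> F (\<lambda>x. (\<xi> x - \<zeta> x)\<^sup>2)"
      unfolding Phi_def by (rule F_ge[OF sqLq[OF xir Lsub_Lp[OF z]] fs])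
    finally show "F (\<lambda>x. (\<xi> x - es x)\<^sup>2) \<le> F (\<lambda>x. (\<xi> x - \<zeta> x)\<^sup>2)" .
  qed
  thus ?thesis by blast
qed

end

locale hbl =
  fixes V :: "('a \<Rightarrow> real) set" and \<rho> :: "('a \<Rightarrow> real) \<Rightarrow> real"
  assumes addV: "X \<in> V \<Longrightarrow> Y \<in> V \<Longrightarrow> (\<lambda>x. X x + Y x) \<in> V"
    and smulV: "X \<in> V \<Longrightarrow> (\<lambda>x. c * X x) \<in> V"
    and zeroV: "(\<lambda>x. 0) \<in> V"
    and rsub: "X \<in> V \<Longrightarrow> Y \<in> V \<Longrightarrow> \<rho> (\<lambda>x. X x + Y x) \<le> \<rho> X + \<rho> Y"
    and rhom: "X \<in> V \<Longrightarrow> 0 \<le> l \<Longrightarrow> \<rho> (\<lambda>x. l * X x) = l * \<rho> X"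
begin

lemma negV: "X \<in> V \<Longrightarrow> (\<lambda>x. - X x) \<in> V"
  using smulV[of X "-1"] by simp

definition sublin where
  "sublin p \<longleftrightarrow> (\<forall>X\<in>V. \<forall>Y\<in>V. p (\<lambda>x. X x + Y x) \<le> p X + p Y) \<and> (\<forall>X\<in>V. \<forall>l\<ge>0. p (\<lambda>x. l * X x) = l * p X)"

lemma sl_sub: "sublin p \<Longrightarrow> X \<in> V \<Longrightarrow> Y \<in> V \<Longrightarrow> p (\<lambda>x. X x + Y x) \<le> p X + p Y"
  by (simp add: sublin_def)
lemma sl_hom: "sublin p \<Longrightarrow> X \<in> V \<Longrightarrow> 0 \<le> l \<Longrightarrow> p (\<lambda>x. l * X x) = l * p X"
  by (simp add: sublin_def)

lemma sl_zero: assumes "sublin p" shows "p (\<lambda>x. 0) = 0"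
  using sl_hom[OF assms zeroV, of 0] by simp

lemma sl_neg: assumes p: "sublin p" and X: "X \<in> V" shows "- p (\<lambda>x. - X x) \<le> p X"
proof -
  have "p (\<lambda>x. X x + - X x) \<le> p X + p (\<lambda>x. - X x)" by (rule sl_sub[OF p X negV[OF X]])
  thus ?thesis using sl_zero[OF p] by simp
qed

lemma sublin_rho: "sublin \<rho>" by (simp add: sublin_def rsub rhom)

definition SS where "SS = {p. sublin p \<and> (\<forall>X\<in>V. p X \<le> \<rho> X) \<and> (\<forall>X. X \<notin> V \<longrightarrow> p X = 0)}"
definition RR where "RR = {(p, q). p \<in> SS \<and> q \<in> SS \<and> (\<forall>X\<in>V. q X \<le> p X)}"

lemma Field_RR: "Field RR = SS"
  unfolding Field_def RR_def by auto

lemma po_RR: "Partial_order RR"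
  unfolding partial_order_on_def preorder_on_def refl_on_def trans_def antisym_def Field_RR
proof (intro conjI allI impI ballI)
  show "RR \<subseteq> SS \<times> SS" unfolding RR_def by auto
  fix p assume "p \<in> SS" thus "(p, p) \<in> RR" unfolding RR_def by auto
next
  fix p q r assume "(p, q) \<in> RR" "(q, r) \<in> RR" thus "(p, r) \<in> RR"
    unfolding RR_def by (auto intro: order_trans)
next
  fix p q assume a: "(p, q) \<in> RR" "(q, p) \<in> RR"
  show "p = q"
  proof
    fix X show "p X = q X"
    proof (cases "X \<in> V")
      case True thus ?thesis using a unfolding RR_def by (auto intro: antisym)
    next
      case False thus ?thesis using a unfolding RR_def SS_def by auto
    qed
  qed
qed

lemma SS_lower: "p \<in> SS \<Longrightarrow> X \<in> V \<Longrightarrow> - \<rho> (\<lambda>x. - X x) \<le> p X"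
  using sl_neg[of p X] negV[of X] unfolding SS_def by force

definition rho0 where "rho0 X = (if X \<in> V then \<rho> X else 0)"

lemma sublin_cong: "sublin p \<Longrightarrow> (\<And>X. X \<in> V \<Longrightarrow> q X = p X) \<Longrightarrow> sublin q"
  unfolding sublin_def by (simp add: addV smulV)

lemma rho0_SS: "rho0 \<in> SS"
  unfolding SS_def using sublin_cong[OF sublin_rho, of rho0] by (auto simp: rho0_def)

lemma chain_inf:
  assumes Ch: "Ch \<in> Chains RR" and ne: "Ch \<noteq> {}"
  defines "u \<equiv> (\<lambda>X. if X \<in> V then (INF p\<in>Ch. p X) else 0)"
  shows "u \<in> SS" "\<And>a. a \<in> Ch \<Longrightarrow> (a, u) \<in> RR"
proof -
  have ChS: "Ch \<subseteq> SS" using Ch unfolding Chains_def RR_def by auto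
  have cmp: "\<And>a b. a \<in> Ch \<Longrightarrow> b \<in> Ch \<Longrightarrow> (\<forall>X\<in>V. a X \<le> b X) \<or> (\<forall>X\<in>V. b X \<le> a X)"
    using Ch unfolding Chains_def RR_def by blast
  have bdd: "bdd_below ((\<lambda>p. p X) ` Ch)" if "X \<in> V" for X
    using SS_lower[OF _ that] ChS by (intro bdd_belowI[where m="- \<rho> (\<lambda>x. - X x)"]) auto
  have low: "u X \<le> a X" if "a \<in> Ch" "X \<in> V" for a X
    unfolding u_def using that bdd by (auto intro: cINF_lower)
  have grt: "c \<le> u X" if "X \<in> V" "\<And>a. a \<in> Ch \<Longrightarrow> c \<le> a X" for c X
    unfolding u_def using that ne by (auto intro: cINF_greatest)
  have sub: "u (\<lambda>x. X x + Y x) \<le> u X + u Y" if X: "X \<in> V" and Y: "Y \<in> V" for X Y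
  proof -
    have "u (\<lambda>x. X x + Y x) \<le> a X + b Y" if a: "a \<in> Ch" and b: "b \<in> Ch" for a b
    proof -
      obtain c where c: "c \<in> Ch" "c X \<le> a X" "c Y \<le> b Y"
        using cmp[OF a b] a b X Y by auto
      have "u (\<lambda>x. X x + Y x) \<le> c (\<lambda>x. X x + Y x)" by (rule low[OF c(1) addV[OF X Y]])
      also have "\<dots> \<le> c X + c Y" using ChS c(1) X Y by (intro sl_sub) (auto simp: SS_def)
      finally show ?thesis using c by simp
    qed
    hence "u (\<lambda>x. X x + Y x) - b Y \<le> u X" if "b \<in> Ch" for b
      using that by (intro grt[OF X]) (simp add: algebra_simps)
    hence "u (\<lambda>x. X x + Y x) - u X \<le> u Y" by (intro grt[OF Y]) (simp add: algebra_simps)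
    thus ?thesis by simp
  qed
  have hom: "u (\<lambda>x. l * X x) = l * u X" if X: "X \<in> V" and l: "0 \<le> l" for X l
  proof (cases "l = 0")
    case True
    have "u (\<lambda>x. 0) = 0"
    proof (rule antisym)
      obtain a where a: "a \<in> Ch" using ne by auto
      show "u (\<lambda>x. 0) \<le> 0" using low[OF a zeroV] sl_zero[of a] ChS a by (auto simp: SS_def)
      show "0 \<le> u (\<lambda>x. 0)"
      proof (rule grt[OF zeroV])
        fix a assume "a \<in> Ch" hence "sublin a" using ChS by (auto simp: SS_def)
        thus "0 \<le> a (\<lambda>x. 0)" by (simp add: sl_zero)
      qed
    qed
    thus ?thesis using True by simp
  next
    case False
    hence l0: "0 < l" using l by simp
    have eqa: "a (\<lambda>x. l * X x) = l * a X" if "a \<in> Ch" for a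
      using ChS that X l by (intro sl_hom) (auto simp: SS_def)
    show ?thesis
    proof (rule antisym)
      have "u X \<le> a X" if "a \<in> Ch" for a using low[OF that X] .
      have "(1/l) * u (\<lambda>x. l * X x) \<le> u X"
      proof (rule grt[OF X])
        fix a assume a: "a \<in> Ch"
        have "u (\<lambda>x. l * X x) \<le> a (\<lambda>x. l * X x)" by (rule low[OF a smulV[OF X]])
        also have "\<dots> = l * a X" by (rule eqa[OF a])
        finally show "(1/l) * u (\<lambda>x. l * X x) \<le> a X" using l0 by (simp add: field_simps)
      qed
      thus "u (\<lambda>x. l * X x) \<le> l * u X" using l0 by (simp add: field_simps)
      show "l * u X \<le> u (\<lambda>x. l * X x)"
        using l0 by (intro grt[OF smulV[OF X]]) (auto simp: eqa low[OF _ X])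
    qed
  qed
  show "u \<in> SS" unfolding SS_def sublin_def
  proof (intro CollectI conjI ballI allI impI)
    show "u (\<lambda>x. X x + Y x) \<le> u X + u Y" if "X \<in> V" "Y \<in> V" for X Y using sub that by blast
    show "u (\<lambda>x. l * X x) = l * u X" if "X \<in> V" "0 \<le> l" for X l using hom that by blast
    fix X assume "X \<in> V"
    obtain a where a: "a \<in> Ch" using ne by auto
    show "u X \<le> \<rho> X" using low[OF a \<open>X \<in> V\<close>] ChS a \<open>X \<in> V\<close> by (force simp: SS_def)
  next
    fix X assume "X \<notin> V" thus "u X = 0" by (simp add: u_def)
  qed
  thus "\<And>a. a \<in> Ch \<Longrightarrow> (a, u) \<in> RR" using ChS low unfolding RR_def by auto
qed

lemma exists_min_SS: "\<exists>m\<in>SS. \<forall>a\<in>SS. (m, a) \<in> RR \<longrightarrow> a = m"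
proof -
  have "\<exists>m\<in>Field RR. \<forall>a\<in>Field RR. (m, a) \<in> RR \<longrightarrow> a = m"
  proof (rule Zorns_po_lemma[OF po_RR])
    fix Ch assume Ch: "Ch \<in> Chains RR"
    show "\<exists>u\<in>Field RR. \<forall>a\<in>Ch. (a, u) \<in> RR"
    proof (cases "Ch = {}")
      case True thus ?thesis using rho0_SS by (auto simp: Field_RR)
    next
      case False thus ?thesis using chain_inf[OF Ch False] by (auto simp: Field_RR)
    qed
  qed
  thus ?thesis by (simp add: Field_RR)
qed

end

context hbl begin

lemma min_neg:
  assumes mS: "m \<in> SS" and mx: "\<forall>a\<in>SS. (m, a) \<in> RR \<longrightarrow> a = m" and y: "y \<in> V"
  shows "m (\<lambda>x. - y x) = - m y"
proof -
  have msl: "sublin m" using mS by (simp add: SS_def)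
  have mrho: "\<And>X. X \<in> V \<Longrightarrow> m X \<le> \<rho> X" using mS by (simp add: SS_def)
  define G where "G = (\<lambda>X (t::real). m (\<lambda>x. X x + t * y x) - t * m y)"
  define qy where "qy = (\<lambda>X. if X \<in> V then (INF t\<in>{0..}. G X t) else 0)"
  have Vt: "X \<in> V \<Longrightarrow> (\<lambda>x. X x + t * y x) \<in> V" for X t by (intro addV smulV y)
  have bdd: "bdd_below (G X ` {0..})" if X: "X \<in> V" for X
  proof (rule bdd_belowI2[where m="- m (\<lambda>x. - X x)"])
    fix t :: real assume t: "t \<in> {0..}"
    have "m (\<lambda>x. (X x + t * y x) + - X x) \<le> m (\<lambda>x. X x + t * y x) + m (\<lambda>x. - X x)"
      by (rule sl_sub[OF msl Vt[OF X] negV[OF X]])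
    moreover have "m (\<lambda>x. t * y x) = t * m y" using t by (intro sl_hom[OF msl y]) auto
    ultimately show "- m (\<lambda>x. - X x) \<le> G X t" by (simp add: G_def)
  qed
  have low: "qy X \<le> G X t" if "X \<in> V" "0 \<le> t" for X t
    unfolding qy_def using that bdd by (auto intro!: cINF_lower)
  have grt: "c \<le> qy X" if "X \<in> V" "\<And>t. 0 \<le> t \<Longrightarrow> c \<le> G X t" for c X
    unfolding qy_def using that by (auto intro!: cINF_greatest)
  have le_m: "qy X \<le> m X" if "X \<in> V" for X using low[OF that, of 0] by (simp add: G_def)
  have sub: "qy (\<lambda>x. X1 x + X2 x) \<le> qy X1 + qy X2" if X1: "X1 \<in> V" and X2: "X2 \<in> V" for X1 X2
  proof -
    have S: "(\<lambda>x. X1 x + X2 x) \<in> V" by (rule addV[OF X1 X2])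
    have key: "qy (\<lambda>x. X1 x + X2 x) \<le> G X1 t1 + G X2 t2" if t: "0 \<le> t1" "0 \<le> t2" for t1 t2
    proof -
      have "qy (\<lambda>x. X1 x + X2 x) \<le> G (\<lambda>x. X1 x + X2 x) (t1 + t2)" using low[OF S] t by simp
      also have "\<dots> = m (\<lambda>x. (X1 x + t1 * y x) + (X2 x + t2 * y x)) - (t1 + t2) * m y"
        by (simp add: G_def algebra_simps)
      also have "\<dots> \<le> m (\<lambda>x. X1 x + t1 * y x) + m (\<lambda>x. X2 x + t2 * y x) - (t1 + t2) * m y"
        using sl_sub[OF msl Vt[OF X1] Vt[OF X2]] by simp
      also have "\<dots> = G X1 t1 + G X2 t2" by (simp add: G_def algebra_simps)
      finally show ?thesis .
    qed
    have "qy (\<lambda>x. X1 x + X2 x) - G X2 t2 \<le> qy X1" if "0 \<le> t2" for t2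
      using key that by (intro grt[OF X1]) (simp add: algebra_simps)
    hence "qy (\<lambda>x. X1 x + X2 x) - qy X1 \<le> qy X2" by (intro grt[OF X2]) (simp add: algebra_simps)
    thus ?thesis by simp
  qed
  have hom: "qy (\<lambda>x. l * X x) = l * qy X" if X: "X \<in> V" and l: "0 \<le> l" for X l
  proof (cases "l = 0")
    case True
    have G0: "G (\<lambda>x. 0) t = 0" if "0 \<le> t" for t
      using sl_hom[OF msl y that] by (simp add: G_def)
    have "qy (\<lambda>x. 0) = 0"
    proof (rule antisym)
      show "qy (\<lambda>x. 0) \<le> 0" using low[OF zeroV, of 0] G0[of 0] by simp
      show "0 \<le> qy (\<lambda>x. 0)" by (rule grt[OF zeroV]) (simp add: G0)
    qed
    thus ?thesis using True by simp
  next
    case False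
    hence l0: "0 < l" using l by simp
    have lX: "(\<lambda>x. l * X x) \<in> V" by (rule smulV[OF X])
    have Gl: "G (\<lambda>x. l * X x) t = l * G X (t / l)" for t
    proof -
      have lt: "l * (t / l) = t" using l0 by simp
      have "(\<lambda>x. l * X x + t * y x) = (\<lambda>x. l * (X x + (t / l) * y x))"
        by (rule ext) (simp only: distrib_left mult.assoc[symmetric] lt)
      hence e0: "m (\<lambda>x. l * X x + t * y x) = m (\<lambda>x. l * (X x + (t / l) * y x))" by (simp only:)
      have e1: "m (\<lambda>x. l * (X x + (t / l) * y x)) = l * m (\<lambda>x. X x + (t / l) * y x)"
        by (rule sl_hom[OF msl Vt[OF X] l])
      have e: "m (\<lambda>x. l * X x + t * y x) = l * m (\<lambda>x. X x + (t / l) * y x)" using e0 e1 by (rule trans)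
      have "l * G X (t / l) = l * m (\<lambda>x. X x + (t / l) * y x) - (l * (t / l)) * m y"
        unfolding G_def by (simp only: right_diff_distrib mult.assoc)
      also have "\<dots> = m (\<lambda>x. l * X x + t * y x) - t * m y" unfolding lt e ..
      finally show ?thesis unfolding G_def by simp
    qed
    show ?thesis
    proof (rule antisym)
      have "(1/l) * qy (\<lambda>x. l * X x) \<le> qy X"
      proof (rule grt[OF X])
        fix s :: real assume s: "0 \<le> s"
        have "qy (\<lambda>x. l * X x) \<le> G (\<lambda>x. l * X x) (l * s)" using low[OF lX] s l0 by simp
        also have "\<dots> = l * G X s" using Gl l0 by simp
        finally have "qy (\<lambda>x. l * X x) \<le> l * G X s" .
        thus "(1/l) * qy (\<lambda>x. l * X x) \<le> G X s" using l0 by (simp add: divide_le_eq mult.commute)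
      qed
      hence "l * ((1/l) * qy (\<lambda>x. l * X x)) \<le> l * qy X" using l0 by (intro mult_left_mono) auto
      thus "qy (\<lambda>x. l * X x) \<le> l * qy X" using l0 by simp
      show "l * qy X \<le> qy (\<lambda>x. l * X x)"
      proof (rule grt[OF lX])
        fix t :: real assume t: "0 \<le> t"
        have "l * qy X \<le> l * G X (t / l)" using low[OF X, of "t/l"] t l0 by simp
        thus "l * qy X \<le> G (\<lambda>x. l * X x) t" using Gl by simp
      qed
    qed
  qed
  have qS: "qy \<in> SS" unfolding SS_def sublin_def
  proof (intro CollectI conjI ballI allI impI)
    show "qy (\<lambda>x. X x + Y x) \<le> qy X + qy Y" if "X \<in> V" "Y \<in> V" for X Y using sub that by blast
    show "qy (\<lambda>x. l * X x) = l * qy X" if "X \<in> V" "0 \<le> l" for X l using hom that by blast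
    show "qy X \<le> \<rho> X" if "X \<in> V" for X using le_m[OF that] mrho[OF that] by linarith
    show "qy X = 0" if "X \<notin> V" for X using that by (simp add: qy_def)
  qed
  have "(m, qy) \<in> RR" using mS qS le_m by (simp add: RR_def)
  hence qm: "qy = m" using mx qS by blast
  have "m (\<lambda>x. - y x) = qy (\<lambda>x. - y x)" using qm by simp
  also have "\<dots> \<le> G (\<lambda>x. - y x) 1" by (rule low[OF negV[OF y]]) simp
  also have "\<dots> = - m y" using sl_zero[OF msl] by (simp add: G_def)
  finally have "m (\<lambda>x. - y x) \<le> - m y" .
  moreover have "- m (\<lambda>x. - y x) \<le> m y" by (rule sl_neg[OF msl y])
  ultimately show ?thesis by simp
qed

lemma HB: "\<exists>L. (\<forall>X\<in>V. \<forall>Y\<in>V. L (\<lambda>x. X x + Y x) = L X + L Y) \<and> (\<forall>X\<in>V. \<forall>c. L (\<lambda>x. c * X x) = c * L X)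
   \<and> (\<forall>X\<in>V. L X \<le> \<rho> X)"
proof -
  obtain m where mS: "m \<in> SS" and mx: "\<forall>a\<in>SS. (m, a) \<in> RR \<longrightarrow> a = m" using exists_min_SS by blast
  have msl: "sublin m" using mS by (simp add: SS_def)
  have neg: "\<And>y. y \<in> V \<Longrightarrow> m (\<lambda>x. - y x) = - m y" using min_neg[OF mS mx] .
  show ?thesis
  proof (intro exI[of _ m] conjI ballI allI)
    fix X Y assume X: "X \<in> V" and Y: "Y \<in> V"
    have a: "m (\<lambda>x. X x + Y x) \<le> m X + m Y" by (rule sl_sub[OF msl X Y])
    have "m (\<lambda>x. - X x + - Y x) \<le> m (\<lambda>x. - X x) + m (\<lambda>x. - Y x)" by (rule sl_sub[OF msl negV[OF X] negV[OF Y]])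
    moreover have "m (\<lambda>x. - X x + - Y x) = - m (\<lambda>x. X x + Y x)"
      using neg[OF addV[OF X Y]] by simp
    ultimately have "m X + m Y \<le> m (\<lambda>x. X x + Y x)" using neg[OF X] neg[OF Y] by simp
    thus "m (\<lambda>x. X x + Y x) = m X + m Y" using a by simp
  next
    fix X c assume X: "X \<in> V"
    show "m (\<lambda>x. c * X x) = c * m X"
    proof (cases "0 \<le> c")
      case True thus ?thesis by (rule sl_hom[OF msl X])
    next
      case False
      have "m (\<lambda>x. c * X x) = m (\<lambda>x. (- c) * (- X x))" by simp
      also have "\<dots> = (- c) * m (\<lambda>x. - X x)" using False by (intro sl_hom[OF msl negV[OF X]]) simp
      also have "\<dots> = c * m X" using neg[OF X] by simp
      finally show ?thesis .
    qed
  next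
    fix X assume "X \<in> V" thus "m X \<le> \<rho> X" using mS by (simp add: SS_def)
  qed
qed

end

context sett begin

lemma rho_mono: "X \<in> Lp M rr \<Longrightarrow> Y \<in> Lp M rr \<Longrightarrow> (AE x in M. X x \<le> Y x) \<Longrightarrow> \<rho> X \<le> \<rho> Y"
  using subl unfolding sublinear_op_def by blast
lemma rho_const: "\<rho> (\<lambda>_. c) = c"
  using subl unfolding sublinear_op_def by blast
lemma rho_sub: "X \<in> Lp M rr \<Longrightarrow> Y \<in> Lp M rr \<Longrightarrow> \<rho> (\<lambda>x. X x + Y x) \<le> \<rho> X + \<rho> Y"
  using subl unfolding sublinear_op_def by blast
lemma rho_hom: "X \<in> Lp M rr \<Longrightarrow> 0 \<le> l \<Longrightarrow> \<rho> (\<lambda>x. l * X x) = l * \<rho> X"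
  using subl unfolding sublinear_op_def by blast

lemma enn2real_le: "ennreal (enn2real s) \<le> s"
  by (cases s rule: ennreal_cases) auto

lemma sup_bound:
  fixes T :: "nat \<Rightarrow> 'a \<Rightarrow> real"
  assumes TL: "\<And>k. T k \<in> Lp M rr" and Tn: "\<And>k x. 0 \<le> T k x"
    and Ti: "\<And>k. integral\<^sup>L M (\<lambda>x. \<bar>T k x\<bar> powr rr) \<le> (1/2)^k / (real k + 1) powr rr"
  shows "\<exists>Z \<in> Lp M rr. (\<forall>x. 0 \<le> Z x) \<and> (\<forall>k. AE x in M. (real k + 1) * T k x \<le> Z x)"
proof -
  have [measurable]: "T k \<in> borel_measurable M" for k using TL Lp_meas by blast
  define S where "S = (\<lambda>x. \<Sum>k. ennreal (((real k + 1) * T k x) powr rr))"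
  have [measurable]: "S \<in> borel_measurable M" unfolding S_def by measurable
  have trm: "((real k + 1) * T k x) powr rr = (real k + 1) powr rr * \<bar>T k x\<bar> powr rr" for k x
    using Tn[of k x] by (simp add: powr_mult)
  have "integral\<^sup>N M S = (\<Sum>k. \<integral>\<^sup>+ x. ennreal (((real k + 1) * T k x) powr rr) \<partial>M)"
    unfolding S_def by (rule nn_integral_suminf) measurable
  also have "\<dots> = (\<Sum>k. ennreal ((real k + 1) powr rr * integral\<^sup>L M (\<lambda>x. \<bar>T k x\<bar> powr rr)))"
  proof (rule suminf_cong)
    fix k
    have i: "integrable M (\<lambda>x. (real k + 1) powr rr * \<bar>T k x\<bar> powr rr)" using Lp_int[OF TL] by simp
    have "(\<integral>\<^sup>+ x. ennreal (((real k + 1) * T k x) powr rr) \<partial>M)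
       = (\<integral>\<^sup>+ x. ennreal ((real k + 1) powr rr * \<bar>T k x\<bar> powr rr) \<partial>M)" unfolding trm ..
    also have "\<dots> = ennreal (integral\<^sup>L M (\<lambda>x. (real k + 1) powr rr * \<bar>T k x\<bar> powr rr))"
      by (rule nn_integral_eq_integral[OF i]) simp
    finally show "(\<integral>\<^sup>+ x. ennreal (((real k + 1) * T k x) powr rr) \<partial>M)
       = ennreal ((real k + 1) powr rr * integral\<^sup>L M (\<lambda>x. \<bar>T k x\<bar> powr rr))" by simp
  qed
  also have "\<dots> \<le> (\<Sum>k. ennreal ((1/2)^k))"
  proof (intro suminf_le summableI ennreal_leI)
    fix k
    have "(real k + 1) powr rr * integral\<^sup>L M (\<lambda>x. \<bar>T k x\<bar> powr rr) \<le> (real k + 1) powr rr * ((1/2)^k / (real k + 1) powr rr)"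
      by (intro mult_left_mono Ti) simp
    also have "\<dots> = (1/2)^k" by simp
    finally show "(real k + 1) powr rr * integral\<^sup>L M (\<lambda>x. \<bar>T k x\<bar> powr rr) \<le> (1/2)^k" .
  qed
  also have "\<dots> = ennreal (\<Sum>k. (1/2::real)^k)"
    by (rule suminf_ennreal2) (auto intro: summable_geometric)
  also have "\<dots> < \<top>" by simp
  finally have Sfin: "integral\<^sup>N M S < \<top>" .
  have AEfin: "AE x in M. S x \<noteq> \<infinity>"
    by (rule nn_integral_noteq_infinite) (use Sfin in auto)
  define Z where "Z = (\<lambda>x. enn2real (S x) powr (1/rr))"
  have [measurable]: "Z \<in> borel_measurable M" unfolding Z_def by measurable
  have Zr: "\<bar>Z x\<bar> powr rr = enn2real (S x)" for x
    unfolding Z_def using rr_pos by (simp add: powr_powr)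
  have iS: "integrable M (\<lambda>x. enn2real (S x))"
  proof (rule integrableI_bounded)
    show "(\<lambda>x. enn2real (S x)) \<in> borel_measurable M" by measurable
    have "(\<integral>\<^sup>+ x. ennreal (norm (enn2real (S x))) \<partial>M) \<le> integral\<^sup>N M S"
      by (intro nn_integral_mono) (simp add: enn2real_le)
    thus "(\<integral>\<^sup>+ x. ennreal (norm (enn2real (S x))) \<partial>M) < \<infinity>" using Sfin by simp
  qed
  have ZL: "Z \<in> Lp M rr" by (rule Lp_I) (use iS Zr in auto)
  have bound: "AE x in M. (real k + 1) * T k x \<le> Z x" for k
    using AEfin
  proof eventually_elim
    case (elim x)
    have "ennreal (((real k + 1) * T k x) powr rr) \<le> S x"
    proof -
      have "(\<Sum>i\<in>{k}. ennreal (((real i + 1) * T i x) powr rr)) \<le> S x"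
        unfolding S_def by (rule sum_le_suminf) (auto intro: summableI)
      thus ?thesis by simp
    qed
    hence "((real k + 1) * T k x) powr rr \<le> enn2real (S x)"
      using elim by (cases "S x" rule: ennreal_cases) auto
    hence "(((real k + 1) * T k x) powr rr) powr (1/rr) \<le> enn2real (S x) powr (1/rr)"
      using rr_pos by (intro powr_mono2) auto
    thus ?case using rr_pos Tn[of k x] by (simp add: powr_powr Z_def)
  qed
  show ?thesis using ZL bound by (intro bexI[of _ Z]) (auto simp: Z_def)
qed

end

context sett begin

lemma rho_zero: "\<rho> (\<lambda>x. 0) = 0" using rho_const[of 0] by simp

lemma rho_nonneg: "X \<in> Lp M rr \<Longrightarrow> (\<And>x. 0 \<le> X x) \<Longrightarrow> 0 \<le> \<rho> X"
  using rho_mono[of "\<lambda>x. 0" X] Lp_const[OF fin, of 0 rr] rho_zero by auto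

lemma rho_dec0:
  fixes T :: "nat \<Rightarrow> 'a \<Rightarrow> real"
  assumes TL: "\<And>k. T k \<in> Lp M rr" and Tn: "\<And>k x. 0 \<le> T k x"
    and dec: "\<And>k x. T (Suc k) x \<le> T k x"
    and lim: "(\<lambda>k. integral\<^sup>L M (\<lambda>x. \<bar>T k x\<bar> powr rr)) \<longlonglongrightarrow> 0"
  shows "(\<lambda>k. \<rho> (T k)) \<longlonglongrightarrow> 0"
proof -
  have "\<forall>j. \<exists>k. integral\<^sup>L M (\<lambda>x. \<bar>T k x\<bar> powr rr) < (1/2)^j / (real j + 1) powr rr"
  proof
    fix j :: nat
    have "0 < (1/2::real)^j / (real j + 1) powr rr" by simp
    from order_tendstoD(2)[OF lim this] obtain k where
      "integral\<^sup>L M (\<lambda>x. \<bar>T k x\<bar> powr rr) < (1/2)^j / (real j + 1) powr rr"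
      by (auto simp: eventually_sequentially)
    thus "\<exists>k. integral\<^sup>L M (\<lambda>x. \<bar>T k x\<bar> powr rr) < (1/2)^j / (real j + 1) powr rr" by blast
  qed
  from choice[OF this] obtain kk where kk: "\<And>j. integral\<^sup>L M (\<lambda>x. \<bar>T (kk j) x\<bar> powr rr) < (1/2)^j / (real j + 1) powr rr"
    by blast
  obtain Z where ZL: "Z \<in> Lp M rr" and Zn: "\<forall>x. 0 \<le> Z x"
    and Zb: "\<forall>j. AE x in M. (real j + 1) * T (kk j) x \<le> Z x"
    using sup_bound[of "\<lambda>j. T (kk j)", OF TL Tn less_imp_le[OF kk]] by blast
  have Tdec: "T k x \<le> T k' x" if "k' \<le> k" for k k' x
    using that by (induction k) (auto simp: le_Suc_eq intro: order_trans[OF dec])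
  have rT0: "0 \<le> \<rho> (T k)" for k by (rule rho_nonneg[OF TL Tn])
  have bnd: "(real j + 1) * \<rho> (T (kk j)) \<le> \<rho> Z" for j
  proof -
    have "(real j + 1) * \<rho> (T (kk j)) = \<rho> (\<lambda>x. (real j + 1) * T (kk j) x)"
      by (rule rho_hom[symmetric, OF TL]) simp
    also have "\<dots> \<le> \<rho> Z" by (rule rho_mono[OF Lp_scale[OF TL] ZL]) (use Zb in blast)
    finally show ?thesis .
  qed
  show ?thesis
  proof (rule order_tendstoI)
    fix a :: real assume "a < 0"
    hence "a < \<rho> (T k)" for k using rT0[of k] by linarith
    thus "eventually (\<lambda>k. a < \<rho> (T k)) sequentially" by simp
  next
    fix a :: real assume a: "0 < a"
    obtain j :: nat where j: "\<rho> Z / a < real j" using reals_Archimedean2 by blast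
    have "\<rho> (T k) < a" if k: "kk j \<le> k" for k
    proof -
      have "\<rho> (T k) \<le> \<rho> (T (kk j))"
        by (rule rho_mono[OF TL TL]) (use Tdec[OF k] in auto)
      also have "\<rho> (T (kk j)) \<le> \<rho> Z / (real j + 1)"
        using bnd[of j] by (subst pos_le_divide_eq) (auto simp: mult.commute)
      also have "\<dots> < a"
      proof -
        have "\<rho> Z < real j * a" using j a by (simp add: pos_divide_less_eq)
        also have "\<dots> \<le> (real j + 1) * a" using a by simp
        finally show ?thesis by (subst pos_divide_less_eq) (auto simp: mult.commute)
      qed
      finally show ?thesis .
    qed
    thus "eventually (\<lambda>k. \<rho> (T k) < a) sequentially" by (auto simp: eventually_sequentially)
  qed
qed

end

locale linL = sett +
  fixes L :: "('a \<Rightarrow> real) \<Rightarrow> real"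
  assumes Ladd: "X \<in> Lp M rr \<Longrightarrow> Y \<in> Lp M rr \<Longrightarrow> L (\<lambda>x. X x + Y x) = L X + L Y"
    and Lsmul: "X \<in> Lp M rr \<Longrightarrow> L (\<lambda>x. c * X x) = c * L X"
    and Lle: "X \<in> Lp M rr \<Longrightarrow> L X \<le> \<rho> X"
begin

lemma rr_nn: "0 \<le> rr" using eps0 by simp

lemma Ldiff: "X \<in> Lp M rr \<Longrightarrow> Y \<in> Lp M rr \<Longrightarrow> L (\<lambda>x. X x - Y x) = L X - L Y"
  using Ladd[of X "\<lambda>x. - Y x"] Lsmul[of Y "-1"] Lp_uminus[of Y M rr] by simp

lemma Lzero: "L (\<lambda>x. 0) = 0"
  using Lsmul[OF Lp_const[OF fin, of 0], of 0] by simp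

lemma Lpos: assumes X: "X \<in> Lp M rr" and nn: "AE x in M. 0 \<le> X x" shows "0 \<le> L X"
proof -
  have "L (\<lambda>x. - X x) \<le> \<rho> (\<lambda>x. - X x)" by (rule Lle[OF Lp_uminus[OF X]])
  also have "\<dots> \<le> \<rho> (\<lambda>x. 0)" by (rule rho_mono[OF Lp_uminus[OF X] Lp_const[OF fin]]) (use nn in auto)
  also have "\<dots> = 0" by (rule rho_zero)
  finally show ?thesis using Lsmul[OF X, of "-1"] by simp
qed

lemma Lmono: "X \<in> Lp M rr \<Longrightarrow> Y \<in> Lp M rr \<Longrightarrow> (AE x in M. X x \<le> Y x) \<Longrightarrow> L X \<le> L Y"
  using Lpos[of "\<lambda>x. Y x - X x"] Ldiff[of Y X] Lp_diff[of Y M rr X] rr_nn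
  by (auto elim!: eventually_mono)

lemma Lcong: "X \<in> Lp M rr \<Longrightarrow> Y \<in> Lp M rr \<Longrightarrow> (AE x in M. X x = Y x) \<Longrightarrow> L X = L Y"
  by (rule antisym; rule Lmono) (auto elim!: eventually_mono)

lemma L1: "L (\<lambda>x. 1) = 1"
proof -
  have a: "L (\<lambda>x. 1) \<le> 1" using Lle[OF Lp_const[OF fin, of 1]] rho_const[of 1] by simp
  have "L (\<lambda>x. -1) \<le> -1" using Lle[OF Lp_const[OF fin, of "-1"]] rho_const[of "-1"] by simp
  moreover have "L (\<lambda>x. -1) = - L (\<lambda>x. 1)" using Lsmul[OF Lp_const[OF fin, of 1], of "-1"] by simp
  ultimately show ?thesis using a by simp
qed

lemma Ldec0:
  fixes T :: "nat \<Rightarrow> 'a \<Rightarrow> real"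
  assumes TL: "\<And>k. T k \<in> Lp M rr" and Tn: "\<And>k x. 0 \<le> T k x"
    and dec: "\<And>k x. T (Suc k) x \<le> T k x"
    and lim: "(\<lambda>k. integral\<^sup>L M (\<lambda>x. \<bar>T k x\<bar> powr rr)) \<longlonglongrightarrow> 0"
  shows "(\<lambda>k. L (T k)) \<longlonglongrightarrow> 0"
proof (rule tendsto_sandwich[where f="\<lambda>k. 0" and h="\<lambda>k. \<rho> (T k)"])
  show "\<forall>\<^sub>F k in sequentially. 0 \<le> L (T k)" using Lpos[OF TL] Tn by auto
  show "\<forall>\<^sub>F k in sequentially. L (T k) \<le> \<rho> (T k)" using Lle[OF TL] by auto
  show "(\<lambda>k. \<rho> (T k)) \<longlonglongrightarrow> 0" by (rule rho_dec0[OF TL Tn dec lim])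
qed simp

lemma ind_Lp: "A \<in> sets M \<Longrightarrow> (indicator A :: 'a \<Rightarrow> real) \<in> Lp M rr"
  by (rule Lp_bound[OF Lp_const[OF fin, of 1]]) (auto simp: rr_nn indicator_def)

lemma ind_empty: "(indicator {} :: 'a \<Rightarrow> real) = (\<lambda>x. 0)" by (auto simp: fun_eq_iff)

definition mu0 where "mu0 A = ennreal (L (indicator A))"

lemma ind_powr: "\<bar>indicator A x :: real\<bar> powr rr = indicator A x"
  using rr_pos by (auto simp: indicator_def)

lemma ind_powr2: "(indicator A x :: real) powr rr = indicator A x"
  using rr_pos by (auto simp: indicator_def)

lemma mu0_ca: "countably_additive (sets M) mu0"
proof (rule sets.empty_continuous_imp_countably_additive)
  show "positive (sets M) mu0" unfolding positive_def mu0_def using Lzero by (simp add: ind_empty)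
  show "additive (sets M) mu0" unfolding additive_def mu0_def
  proof (intro ballI impI)
    fix A B assume A: "A \<in> sets M" and B: "B \<in> sets M" and d: "A \<inter> B = {}"
    have "(indicator (A \<union> B) :: 'a \<Rightarrow> real) = (\<lambda>x. indicator A x + indicator B x)"
      using d by (auto simp: fun_eq_iff indicator_def)
    hence "L (indicator (A \<union> B)) = L (indicator A) + L (indicator B)"
      using Ladd[OF ind_Lp[OF A] ind_Lp[OF B]] by simp
    moreover have "0 \<le> L (indicator A)" "0 \<le> L (indicator B)"
      using Lpos[OF ind_Lp[OF A]] Lpos[OF ind_Lp[OF B]] by auto
    ultimately show "ennreal (L (indicator (A \<union> B))) = ennreal (L (indicator A)) + ennreal (L (indicator B))"
      by (simp add: ennreal_plus)
  qed
  show "\<forall>A\<in>sets M. mu0 A \<noteq> \<infinity>" by (simp add: mu0_def)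
  fix A :: "nat \<Rightarrow> 'a set" assume A: "range A \<subseteq> sets M" "decseq A" "(\<Inter>i. A i) = {}"
  have AM: "A i \<in> sets M" for i using A(1) by auto
  have "(\<lambda>i. L (indicator (A i))) \<longlonglongrightarrow> 0"
  proof (rule Ldec0)
    show "indicator (A k) \<in> Lp M rr" for k by (rule ind_Lp[OF AM])
    show "0 \<le> (indicator (A k) x :: real)" for k x by simp
    show "indicator (A (Suc k)) x \<le> (indicator (A k) x :: real)" for k x
      using A(2) by (auto simp: indicator_def decseq_Suc_iff)
    have "(\<lambda>k. measure M (A k)) \<longlonglongrightarrow> measure M (\<Inter>i. A i)"
      by (rule P.finite_Lim_measure_decseq[OF A(1,2)])
    thus "(\<lambda>k. integral\<^sup>L M (\<lambda>x. \<bar>indicator (A k) x :: real\<bar> powr rr)) \<longlonglongrightarrow> 0"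
      using A(3) AM by (simp add: ind_powr2)
  qed
  thus "(\<lambda>i. mu0 (A i)) \<longlonglongrightarrow> 0" unfolding mu0_def
    using tendsto_ennrealI by fastforce
qed

definition NN where "NN = measure_of (space M) (sets M) mu0"

lemma NN_emeasure: "A \<in> sets M \<Longrightarrow> emeasure NN A = mu0 A"
  unfolding NN_def
  by (rule emeasure_measure_of_sigma[OF sets.sigma_algebra_axioms _ mu0_ca])
    (auto simp: positive_def mu0_def Lzero ind_empty)

lemma NN_sets: "sets NN = sets M"
  unfolding NN_def by simp

lemma NN_ac: "absolutely_continuous M NN"
  unfolding absolutely_continuous_def
proof
  fix A assume A: "A \<in> null_sets M"
  have AM: "A \<in> sets M" using A by auto
  have "AE x in M. x \<notin> A" using AE_not_in[OF A] .
  hence "L (indicator A) = L (\<lambda>x. 0)"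
    by (intro Lcong ind_Lp[OF AM] Lp_const[OF fin]) (auto elim!: eventually_mono)
  hence "emeasure NN A = 0" using NN_emeasure[OF AM] Lzero by (simp add: mu0_def)
  thus "A \<in> null_sets NN" using AM NN_sets by (auto simp: null_sets_def)
qed

end

context linL begin

lemma exists_g: "\<exists>g. g \<in> borel_measurable M \<and> (\<forall>x. 0 \<le> g x) \<and>
   (\<forall>A\<in>sets M. integrable M (\<lambda>x. g x * indicator A x) \<and> integral\<^sup>L M (\<lambda>x. g x * indicator A x) = L (indicator A))"
proof -
  obtain f where f[measurable]: "f \<in> borel_measurable M" and dN: "density M f = NN"
    using P.Radon_Nikodym[OF NN_ac NN_sets] by blast
  have nnA: "(\<integral>\<^sup>+ x. f x * indicator A x \<partial>M) = ennreal (L (indicator A))" if A: "A \<in> sets M" for A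
  proof -
    have "(\<integral>\<^sup>+ x. f x * indicator A x \<partial>M) = emeasure (density M f) A" using A by (simp add: emeasure_density)
    also have "\<dots> = ennreal (L (indicator A))" using NN_emeasure[OF A] dN by (simp add: mu0_def)
    finally show ?thesis .
  qed
  have "(\<integral>\<^sup>+ x. f x \<partial>M) = (\<integral>\<^sup>+ x. f x * indicator (space M) x \<partial>M)"
    by (rule nn_integral_cong) simp
  also have "\<dots> = ennreal (L (indicator (space M)))" by (rule nnA) simp
  finally have "(\<integral>\<^sup>+ x. f x \<partial>M) \<noteq> \<infinity>" by simp
  hence fin: "AE x in M. f x \<noteq> \<infinity>" by (intro nn_integral_noteq_infinite) simp_all
  define g where "g = (\<lambda>x. enn2real (f x))"
  have [measurable]: "g \<in> borel_measurable M" unfolding g_def by simp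
  have gf: "AE x in M. ennreal (g x) = f x" using fin
    by eventually_elim (auto simp: g_def ennreal_enn2real_if)
  have gA: "integrable M (\<lambda>x. g x * indicator A x) \<and> integral\<^sup>L M (\<lambda>x. g x * indicator A x) = L (indicator A)"
    if A[measurable]: "A \<in> sets M" for A
  proof -
    have nn: "(\<integral>\<^sup>+ x. ennreal (g x * indicator A x) \<partial>M) = ennreal (L (indicator A))"
    proof -
      have "(\<integral>\<^sup>+ x. ennreal (g x * indicator A x) \<partial>M) = (\<integral>\<^sup>+ x. f x * indicator A x \<partial>M)"
        by (rule nn_integral_cong_AE) (use gf in \<open>auto simp: indicator_def elim!: eventually_mono\<close>)
      thus ?thesis using nnA[OF A] by simp
    qed
    have LA: "0 \<le> L (indicator A)" by (rule Lpos[OF ind_Lp[OF A]]) auto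
    have i: "integrable M (\<lambda>x. g x * indicator A x)"
      by (rule integrableI_nn_integral_finite[OF _ _ nn]) (auto simp: g_def)
    have "ennreal (integral\<^sup>L M (\<lambda>x. g x * indicator A x)) = ennreal (L (indicator A))"
      using nn_integral_eq_integral[OF i] nn by (simp add: g_def)
    hence "integral\<^sup>L M (\<lambda>x. g x * indicator A x) = L (indicator A)"
      using LA by (subst (asm) ennreal_inj) (auto simp: g_def intro!: integral_nonneg_AE)
    thus ?thesis using i by simp
  qed
  show ?thesis using gA by (intro exI[of _ g]) (auto simp: g_def)
qed

end

context linL begin

lemma g_int_L:
  assumes g[measurable]: "g \<in> borel_measurable M" and gn: "\<And>x. 0 \<le> g x"
    and gA: "\<And>A. A \<in> sets M \<Longrightarrow> integrable M (\<lambda>x. g x * indicator A x) \<and> integral\<^sup>L M (\<lambda>x. g x * indicator A x) = L (indicator A)"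
    and u: "u \<in> borel_measurable M" "\<And>x. 0 \<le> u x"
  shows "u \<in> Lp M rr \<longrightarrow> integrable M (\<lambda>x. g x * u x) \<and> integral\<^sup>L M (\<lambda>x. g x * u x) = L u"
  using u
proof (induction u rule: borel_measurable_induct_real)
  case (set A)
  thus ?case using gA by blast
next
  case (mult u c)
  show ?case
  proof
    assume cu: "(\<lambda>x. c * u x) \<in> Lp M rr"
    show "integrable M (\<lambda>x. g x * (c * u x)) \<and> integral\<^sup>L M (\<lambda>x. g x * (c * u x)) = L (\<lambda>x. c * u x)"
    proof (cases "c = 0")
      case True thus ?thesis using Lzero by simp
    next
      case False
      have uL: "u \<in> Lp M rr"
      proof -
        have "(\<lambda>x. (1/c) * (c * u x)) \<in> Lp M rr" by (rule Lp_scale[OF cu])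
        moreover have "(\<lambda>x. (1/c) * (c * u x)) = u" using False by (auto simp: fun_eq_iff)
        ultimately show ?thesis by simp
      qed
      have IH: "integrable M (\<lambda>x. g x * u x)" "integral\<^sup>L M (\<lambda>x. g x * u x) = L u"
        using mult.IH uL by auto
      have eq: "(\<lambda>x. g x * (c * u x)) = (\<lambda>x. c * (g x * u x))" by (auto simp: fun_eq_iff)
      show ?thesis unfolding eq using IH Lsmul[OF uL, of c] by simp
    qed
  qed
next
  case (add u v)
  show ?case
  proof
    assume vu: "(\<lambda>x. v x + u x) \<in> Lp M rr"
    have uL: "u \<in> Lp M rr" by (rule Lp_bound[OF vu]) (use add rr_nn in auto)
    have vL: "v \<in> Lp M rr" by (rule Lp_bound[OF vu]) (use add rr_nn in auto)
    have IH: "integrable M (\<lambda>x. g x * u x)" "integral\<^sup>L M (\<lambda>x. g x * u x) = L u"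
      "integrable M (\<lambda>x. g x * v x)" "integral\<^sup>L M (\<lambda>x. g x * v x) = L v"
      using add uL vL by auto
    have eq: "(\<lambda>x. g x * (v x + u x)) = (\<lambda>x. g x * v x + g x * u x)" by (auto simp: fun_eq_iff algebra_simps)
    show "integrable M (\<lambda>x. g x * (v x + u x)) \<and> integral\<^sup>L M (\<lambda>x. g x * (v x + u x)) = L (\<lambda>x. v x + u x)"
      unfolding eq using IH Ladd[OF vL uL] by simp
  qed
next
  case (seq U)
  note seq_lim = \<open>\<And>x. x \<in> space M \<Longrightarrow> (\<lambda>i. U i x) \<longlonglongrightarrow> u x\<close>
  note seq_nn = \<open>\<And>i x. 0 \<le> U i x\<close>
  note seq_IH = \<open>\<And>i. U i \<in> Lp M rr \<longrightarrow> integrable M (\<lambda>x. g x * U i x) \<and> integral\<^sup>L M (\<lambda>x. g x * U i x) = L (U i)\<close>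
  show ?case
  proof
    assume uL: "u \<in> Lp M rr"
    have [measurable]: "U i \<in> borel_measurable M" for i using seq by simp
    have [measurable]: "u \<in> borel_measurable M" using uL Lp_meas by blast
    have Ule: "U i x \<le> u x" if "x \<in> space M" for i x
    proof -
      have "incseq (\<lambda>i. U i x)" using \<open>incseq U\<close> by (auto simp: incseq_def le_fun_def)
      thus ?thesis using incseq_le seq_lim[OF that] by blast
    qed
    have UL: "U i \<in> Lp M rr" for i
    proof (rule Lp_bound[OF uL _ _ rr_nn])
      show "U i \<in> borel_measurable M" by simp
      show "AE x in M. \<bar>U i x\<bar> \<le> \<bar>u x\<bar>"
      proof (rule AE_I2)
        fix x assume x: "x \<in> space M"
        have "0 \<le> U i x" "U i x \<le> u x" using seq_nn Ule[OF x] by auto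
        thus "\<bar>U i x\<bar> \<le> \<bar>u x\<bar>" by simp
      qed
    qed
    have IH: "integrable M (\<lambda>x. g x * U i x)" "integral\<^sup>L M (\<lambda>x. g x * U i x) = L (U i)" for i
      using seq_IH UL by auto
    define T where "T = (\<lambda>i x. max 0 (u x - U i x))"
    have TL: "T i \<in> Lp M rr" for i
      unfolding T_def by (rule Lp_bound[OF Lp_diff[OF uL UL[of i] rr_nn]]) (auto simp: rr_nn)
    have LT: "L (T i) = L u - L (U i)" for i
    proof -
      have "L (T i) = L (\<lambda>x. u x - U i x)"
        by (rule Lcong[OF TL Lp_diff[OF uL UL rr_nn]]) (auto simp: T_def Ule intro!: AE_I2)
      thus ?thesis using Ldiff[OF uL UL] by simp
    qed
    have "(\<lambda>i. L (T i)) \<longlonglongrightarrow> 0"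
    proof (rule Ldec0[OF TL])
      show "0 \<le> T k x" for k x by (simp add: T_def)
      show "T (Suc k) x \<le> T k x" for k x
      proof -
        have "U k x \<le> U (Suc k) x" using \<open>incseq U\<close> unfolding incseq_Suc_iff le_fun_def by blast
        thus ?thesis unfolding T_def by simp
      qed
      show "(\<lambda>k. integral\<^sup>L M (\<lambda>x. \<bar>T k x\<bar> powr rr)) \<longlonglongrightarrow> 0"
      proof -
        have "(\<lambda>k. integral\<^sup>L M (\<lambda>x. \<bar>T k x\<bar> powr rr)) \<longlonglongrightarrow> integral\<^sup>L M (\<lambda>x. 0::real)"
        proof (rule integral_dominated_convergence[where w="\<lambda>x. \<bar>u x\<bar> powr rr"])
          show "integrable M (\<lambda>x. \<bar>u x\<bar> powr rr)" by (rule Lp_int[OF uL])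
          show "(\<lambda>x. \<bar>T k x\<bar> powr rr) \<in> borel_measurable M" for k unfolding T_def by measurable
          show "AE x in M. (\<lambda>k. \<bar>T k x\<bar> powr rr) \<longlonglongrightarrow> 0"
          proof (rule AE_I2)
            fix x assume x: "x \<in> space M"
            have "(\<lambda>k. u x - U k x) \<longlonglongrightarrow> u x - u x" by (intro tendsto_intros seq_lim[OF x])
            hence "(\<lambda>k. T k x) \<longlonglongrightarrow> max 0 (u x - u x)" unfolding T_def by (rule tendsto_max[OF tendsto_const])
            hence "(\<lambda>k. \<bar>T k x\<bar> powr rr) \<longlonglongrightarrow> \<bar>0\<bar> powr rr"
              using rr_pos by (intro tendsto_intros) auto
            thus "(\<lambda>k. \<bar>T k x\<bar> powr rr) \<longlonglongrightarrow> 0" by simp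
          qed
          show "AE x in M. norm (\<bar>T k x\<bar> powr rr) \<le> \<bar>u x\<bar> powr rr" for k
          proof (rule AE_I2)
            fix x assume x: "x \<in> space M"
            have "0 \<le> U k x" "U k x \<le> u x" using seq_nn Ule[OF x] by auto
            hence "\<bar>T k x\<bar> \<le> \<bar>u x\<bar>" by (simp add: T_def)
            thus "norm (\<bar>T k x\<bar> powr rr) \<le> \<bar>u x\<bar> powr rr" using rr_nn by (simp add: powr_mono2)
          qed
        qed simp
        thus ?thesis by simp
      qed
    qed
    hence "(\<lambda>i. L u - L (T i)) \<longlonglongrightarrow> L u - 0" by (intro tendsto_intros)
    hence limL: "(\<lambda>i. integral\<^sup>L M (\<lambda>x. g x * U i x)) \<longlonglongrightarrow> L u" using LT IH(2) by simp
    have mono: "AE x in M. mono (\<lambda>i. g x * U i x)"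
      using \<open>incseq U\<close> gn by (auto simp: incseq_def mono_def le_fun_def intro!: mult_left_mono)
    have lim: "AE x in M. (\<lambda>i. g x * U i x) \<longlonglongrightarrow> g x * u x"
      by (rule AE_I2) (intro tendsto_intros seq_lim)
    show "integrable M (\<lambda>x. g x * u x) \<and> integral\<^sup>L M (\<lambda>x. g x * u x) = L u"
      using integrable_monotone_convergence[OF IH(1) mono lim limL]
        integral_monotone_convergence[OF IH(1) mono lim limL] by simp
  qed
qed

lemma g_in_D:
  assumes g[measurable]: "g \<in> borel_measurable M" and gn: "\<And>x. 0 \<le> g x"
    and gA: "\<And>A. A \<in> sets M \<Longrightarrow> integrable M (\<lambda>x. g x * indicator A x) \<and> integral\<^sup>L M (\<lambda>x. g x * indicator A x) = L (indicator A)"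
  shows "g \<in> D"
proof -
  have P: "integrable M (\<lambda>x. g x * u x) \<and> integral\<^sup>L M (\<lambda>x. g x * u x) = L u"
    if "u \<in> Lp M rr" "\<And>x. 0 \<le> u x" for u
    using g_int_L[OF g gn gA, of u] that Lp_meas by blast
  have gX: "integrable M (\<lambda>x. g x * X x) \<and> integral\<^sup>L M (\<lambda>x. g x * X x) = L X" if X: "X \<in> Lp M rr" for X
  proof -
    have [measurable]: "X \<in> borel_measurable M" using X Lp_meas by blast
    define Xp where "Xp = (\<lambda>x. max (X x) 0)"
    define Xm where "Xm = (\<lambda>x. max (- X x) 0)"
    have XpL: "Xp \<in> Lp M rr" unfolding Xp_def by (rule Lp_bound[OF X]) (auto simp: rr_nn)
    have XmL: "Xm \<in> Lp M rr" unfolding Xm_def by (rule Lp_bound[OF X]) (auto simp: rr_nn)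
    have Pp: "integrable M (\<lambda>x. g x * Xp x)" "integral\<^sup>L M (\<lambda>x. g x * Xp x) = L Xp"
      using P[OF XpL] by (auto simp: Xp_def)
    have Pm: "integrable M (\<lambda>x. g x * Xm x)" "integral\<^sup>L M (\<lambda>x. g x * Xm x) = L Xm"
      using P[OF XmL] by (auto simp: Xm_def)
    have eqX: "X = (\<lambda>x. Xp x - Xm x)" by (auto simp: fun_eq_iff Xp_def Xm_def max_def)
    have eq: "(\<lambda>x. g x * X x) = (\<lambda>x. g x * Xp x - g x * Xm x)"
      by (subst eqX) (simp add: algebra_simps)
    have "L X = L Xp - L Xm" by (subst eqX) (rule Ldiff[OF XpL XmL])
    thus ?thesis unfolding eq using Pp Pm by simp
  qed
  show ?thesis unfolding dens_def
  proof (intro CollectI conjI ballI)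
    show "g \<in> borel_measurable M" by simp
    show "AE x in M. 0 \<le> g x" using gn by simp
    have i1: "integrable M (\<lambda>x. g x * 1)" and e1: "integral\<^sup>L M (\<lambda>x. g x * 1) = L (\<lambda>x. 1)"
      using gX[OF Lp_const[OF fin, of 1]] by auto
    show "integrable M g" using i1 by simp
    show "integral\<^sup>L M g = 1" using e1 L1 by simp
    fix X assume X: "X \<in> Lp M rr"
    show "integrable M (\<lambda>x. g x * X x)" using gX[OF X] by simp
    show "integral\<^sup>L M (\<lambda>x. g x * X x) \<le> \<rho> X" using gX[OF X] Lle[OF X] by simp
  qed
qed

lemma D_ne_L: "D \<noteq> {}"
  using exists_g g_in_D by blast

end

context sett begin

lemma D_nonempty: "D \<noteq> {}"
proof -
  interpret H: hbl "Lp M rr" \<rho>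
  proof
    show "X \<in> Lp M rr \<Longrightarrow> Y \<in> Lp M rr \<Longrightarrow> (\<lambda>x. X x + Y x) \<in> Lp M rr" for X Y
      by (rule Lp_add) (use eps0 in auto)
    show "X \<in> Lp M rr \<Longrightarrow> (\<lambda>x. c * X x) \<in> Lp M rr" for X c by (rule Lp_scale)
    show "(\<lambda>x. 0) \<in> Lp M rr" by (rule Lp_const[OF fin])
    show "X \<in> Lp M rr \<Longrightarrow> Y \<in> Lp M rr \<Longrightarrow> \<rho> (\<lambda>x. X x + Y x) \<le> \<rho> X + \<rho> Y" for X Y by (rule rho_sub)
    show "X \<in> Lp M rr \<Longrightarrow> 0 \<le> l \<Longrightarrow> \<rho> (\<lambda>x. l * X x) = l * \<rho> X" for X l by (rule rho_hom)
  qed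
  obtain L where L: "\<forall>X\<in>Lp M rr. \<forall>Y\<in>Lp M rr. L (\<lambda>x. X x + Y x) = L X + L Y"
    "\<forall>X\<in>Lp M rr. \<forall>c. L (\<lambda>x. c * X x) = c * L X" "\<forall>X\<in>Lp M rr. L X \<le> \<rho> X"
    using H.HB by blast
  interpret LL: linL M C eps \<rho> L
    by unfold_locales (use L in auto)
  show ?thesis by (rule LL.D_ne_L)
qed

end

context sett begin

lemma D_ne: "D \<noteq> {}" by (rule D_nonempty)

abbreviation "cr \<equiv> cond_rho M C eps \<rho>"

lemma cr_min: "\<xi> \<in> Lp M ss \<Longrightarrow> is_cond_min M C eps \<rho> \<xi> (cr \<xi>)"
  unfolding cond_rho_def by (rule someI_ex[OF exists_min[OF _ D_ne]])

lemma cr_unique: assumes "\<xi> \<in> Lp M ss" "is_cond_min M C eps \<rho> \<xi> \<eta>" shows "AE x in M. \<eta> x = cr \<xi> x"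
  by (rule cond_min_unique[OF D_ne Lss_Lr[OF assms(1)] assms(2) cr_min[OF assms(1)]])

lemma cr_Lsub: "\<xi> \<in> Lp M ss \<Longrightarrow> cr \<xi> \<in> Lsub"
  using cr_min by (auto simp: is_cond_min_def)

lemma F_scale_le:
  assumes Y: "Y \<in> Lp M qq" and c: "0 \<le> c"
  shows "F (\<lambda>x. c * Y x) \<le> c * F Y"
proof (rule F_least[OF D_ne])
  fix f assume f: "f \<in> D"
  have "integral\<^sup>L M (\<lambda>x. f x * (c * Y x)) = c * integral\<^sup>L M (\<lambda>x. f x * Y x)"
    by (simp add: mult.left_commute)
  also have "\<dots> \<le> c * F Y" using F_ge[OF Y f] c by (rule mult_left_mono)
  finally show "integral\<^sup>L M (\<lambda>x. f x * (c * Y x)) \<le> c * F Y" .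
qed

lemma F_scale:
  assumes Y: "Y \<in> Lp M qq" and c: "0 < c"
  shows "F (\<lambda>x. c * Y x) = c * F Y"
proof (rule antisym)
  show "F (\<lambda>x. c * Y x) \<le> c * F Y" using F_scale_le[OF Y] c by simp
  have "F Y = F (\<lambda>x. (1/c) * (c * Y x))" using c by simp
  also have "\<dots> \<le> (1/c) * F (\<lambda>x. c * Y x)"
    by (rule F_scale_le[OF Lp_scale[OF Y]]) (use c in simp)
  finally show "c * F Y \<le> F (\<lambda>x. c * Y x)" using c by (simp add: field_simps)
qed

lemma part1:
  assumes xi: "\<xi> \<in> Lp M ss" and b: "AE x in M. C1 \<le> \<xi> x \<and> \<xi> x \<le> C2"
  shows "AE x in M. C1 \<le> cr \<xi> x \<and> cr \<xi> x \<le> C2"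
proof -
  define e where "e = cr \<xi>"
  have eL: "e \<in> Lsub" unfolding e_def by (rule cr_Lsub[OF xi])
  define e' where "e' = (\<lambda>x. max C1 (min C2 (e x)))"
  have e'C[measurable]: "e' \<in> borel_measurable C" unfolding e'_def using Lsub_measC[OF eL] by measurable
  have e'L: "e' \<in> Lsub"
  proof (rule Lsub_I[OF Lp_bound[OF Lp_const[OF fin, of "\<bar>C1\<bar> + \<bar>C2\<bar>"]] e'C])
    show "e' \<in> borel_measurable M" by (rule measC_M[OF e'C])
    show "AE x in M. \<bar>e' x\<bar> \<le> \<bar>\<bar>C1\<bar> + \<bar>C2\<bar>\<bar>" unfolding e'_def by auto
  qed (use eps0 in simp)
  have xir: "\<xi> \<in> Lp M rr" by (rule Lss_Lr[OF xi])
  have mn: "is_cond_min M C eps \<rho> \<xi> e" unfolding e_def by (rule cr_min[OF xi])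
  have le: "F (\<lambda>x. (\<xi> x - e' x)\<^sup>2) \<le> F (\<lambda>x. (\<xi> x - e x)\<^sup>2)"
  proof (rule F_mono[OF D_ne sqLq[OF xir Lsub_Lp[OF e'L]] sqLq[OF xir Lsub_Lp[OF eL]]])
    show "AE x in M. (\<xi> x - e' x)\<^sup>2 \<le> (\<xi> x - e x)\<^sup>2"
      using b
    proof eventually_elim
      case (elim x)
      have "\<bar>\<xi> x - e' x\<bar> \<le> \<bar>\<xi> x - e x\<bar>" using elim unfolding e'_def by (auto simp: max_def min_def)
      thus ?case by (simp add: abs_le_square_iff)
    qed
  qed
  have "is_cond_min M C eps \<rho> \<xi> e'"
  proof (rule cond_minI[OF e'L])
    fix \<zeta> assume "\<zeta> \<in> Lsub"
    thus "F (\<lambda>x. (\<xi> x - e' x)\<^sup>2) \<le> F (\<lambda>x. (\<xi> x - \<zeta> x)\<^sup>2)"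
      using le cond_min_le[OF D_ne xir mn] by (meson order_trans)
  qed
  hence "AE x in M. e' x = e x" using cr_unique[OF xi] unfolding e_def by blast
  thus ?thesis using b unfolding e_def[symmetric]
    by eventually_elim (auto simp: e'_def max_def min_def split: if_splits)
qed

lemma part2:
  assumes xi: "\<xi> \<in> Lp M ss"
  shows "AE x in M. cr (\<lambda>y. l * \<xi> y) x = l * cr \<xi> x"
proof (cases "l = 0")
  case True
  have z: "(\<lambda>y. 0::real) \<in> Lp M ss" by (rule Lp_const[OF fin])
  have "is_cond_min M C eps \<rho> (\<lambda>y. 0) (\<lambda>y. 0)"
  proof (rule cond_minI[OF Lsub_const])
    fix \<zeta> assume z: "\<zeta> \<in> Lsub"
    show "F (\<lambda>x. (0 - 0)\<^sup>2) \<le> F (\<lambda>x. (0 - \<zeta> x)\<^sup>2)"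
      by (rule F_mono[OF D_ne]) (use Lp_const[OF fin, of 0 qq] sqLq1[OF Lsub_Lp[OF z]] in auto)
  qed
  hence "AE x in M. 0 = cr (\<lambda>y. 0) x" using cr_unique[OF z] by blast
  thus ?thesis using True by (auto elim!: eventually_mono)
next
  case False
  define e where "e = cr \<xi>"
  have eL: "e \<in> Lsub" unfolding e_def by (rule cr_Lsub[OF xi])
  have xir: "\<xi> \<in> Lp M rr" by (rule Lss_Lr[OF xi])
  have lxi: "(\<lambda>y. l * \<xi> y) \<in> Lp M ss" by (rule Lp_scale[OF xi])
  have mn: "is_cond_min M C eps \<rho> \<xi> e" unfolding e_def by (rule cr_min[OF xi])
  have l2: "0 < l\<^sup>2" using False by simp
  have "is_cond_min M C eps \<rho> (\<lambda>y. l * \<xi> y) (\<lambda>y. l * e y)"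
  proof (rule cond_minI[OF Lsub_scale[OF eL]])
    fix \<zeta> assume z: "\<zeta> \<in> Lsub"
    have z': "(\<lambda>x. (1/l) * \<zeta> x) \<in> Lsub" by (rule Lsub_scale[OF z])
    have eq1: "(\<lambda>x. (l * \<xi> x - l * e x)\<^sup>2) = (\<lambda>x. l\<^sup>2 * (\<xi> x - e x)\<^sup>2)"
      by (auto simp: power2_eq_square algebra_simps)
    have eq2: "(\<lambda>x. (l * \<xi> x - \<zeta> x)\<^sup>2) = (\<lambda>x. l\<^sup>2 * (\<xi> x - (1/l) * \<zeta> x)\<^sup>2)"
      using False by (auto simp: power2_eq_square field_simps)
    have "F (\<lambda>x. (l * \<xi> x - l * e x)\<^sup>2) = l\<^sup>2 * F (\<lambda>x. (\<xi> x - e x)\<^sup>2)"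
      unfolding eq1 by (rule F_scale[OF sqLq[OF xir Lsub_Lp[OF eL]] l2])
    also have "\<dots> \<le> l\<^sup>2 * F (\<lambda>x. (\<xi> x - (1/l) * \<zeta> x)\<^sup>2)"
      using cond_min_le[OF D_ne xir mn z'] l2 by simp
    also have "\<dots> = F (\<lambda>x. (l * \<xi> x - \<zeta> x)\<^sup>2)"
      unfolding eq2 by (rule F_scale[symmetric, OF sqLq[OF xir Lsub_Lp[OF z']] l2])
    finally show "F (\<lambda>x. (l * \<xi> x - l * e x)\<^sup>2) \<le> F (\<lambda>x. (l * \<xi> x - \<zeta> x)\<^sup>2)" .
  qed
  hence "AE x in M. l * e x = cr (\<lambda>y. l * \<xi> y) x" using cr_unique[OF lxi] by blast
  thus ?thesis unfolding e_def by (auto elim!: eventually_mono)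
qed

lemma part3:
  assumes xi: "\<xi> \<in> Lp M ss" and e0: "\<eta>0 \<in> Lsub"
  shows "(AE x in M. cr (\<lambda>y. \<xi> y + \<eta>0 y) x = cr \<xi> x + \<eta>0 x)
      \<and> is_cond_min M C eps \<rho> (\<lambda>y. \<xi> y + \<eta>0 y) (\<lambda>y. cr \<xi> y + \<eta>0 y)
      \<and> (\<forall>\<eta>. is_cond_min M C eps \<rho> (\<lambda>y. \<xi> y + \<eta>0 y) \<eta> \<longrightarrow>
            (AE x in M. \<eta> x = cr \<xi> x + \<eta>0 x))"
proof -
  define e where "e = cr \<xi>"
  have eL: "e \<in> Lsub" unfolding e_def by (rule cr_Lsub[OF xi])
  have xir: "\<xi> \<in> Lp M rr" by (rule Lss_Lr[OF xi])
  have mn: "is_cond_min M C eps \<rho> \<xi> e" unfolding e_def by (rule cr_min[OF xi])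
  have xe: "(\<lambda>y. \<xi> y + \<eta>0 y) \<in> Lp M rr" using Lp_add[OF xir Lsub_Lp[OF e0]] eps0 by simp
  have A: "is_cond_min M C eps \<rho> (\<lambda>y. \<xi> y + \<eta>0 y) (\<lambda>y. e y + \<eta>0 y)"
  proof (rule cond_minI[OF Lsub_add[OF eL e0]])
    fix \<zeta> assume z: "\<zeta> \<in> Lsub"
    have eq1: "(\<lambda>x. (\<xi> x + \<eta>0 x - (e x + \<eta>0 x))\<^sup>2) = (\<lambda>x. (\<xi> x - e x)\<^sup>2)" by simp
    have eq2: "(\<lambda>x. (\<xi> x + \<eta>0 x - \<zeta> x)\<^sup>2) = (\<lambda>x. (\<xi> x - (\<zeta> x - \<eta>0 x))\<^sup>2)" by (simp add: algebra_simps)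
    show "F (\<lambda>x. (\<xi> x + \<eta>0 x - (e x + \<eta>0 x))\<^sup>2) \<le> F (\<lambda>x. (\<xi> x + \<eta>0 x - \<zeta> x)\<^sup>2)"
      unfolding eq1 eq2 by (rule cond_min_le[OF D_ne xir mn Lsub_diff[OF z e0]])
  qed
  have B: "AE x in M. \<eta> x = e x + \<eta>0 x" if "is_cond_min M C eps \<rho> (\<lambda>y. \<xi> y + \<eta>0 y) \<eta>" for \<eta>
    by (rule cond_min_unique[OF D_ne xe that A])
  have Cc: "is_cond_min M C eps \<rho> (\<lambda>y. \<xi> y + \<eta>0 y) (cr (\<lambda>y. \<xi> y + \<eta>0 y))"
    unfolding cond_rho_def by (rule someI[where P="is_cond_min M C eps \<rho> (\<lambda>y. \<xi> y + \<eta>0 y)", OF A])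
  show ?thesis using A B Cc unfolding e_def by blast
qed

end

context sett begin

lemma dens_prob: assumes f: "f \<in> D" shows "prob_space (dens_meas M f)"
proof (rule prob_spaceI)
  have [measurable]: "f \<in> borel_measurable M" using f by simp
  have "emeasure (dens_meas M f) (space (dens_meas M f)) = (\<integral>\<^sup>+ x. ennreal (f x) \<partial>M)"
    unfolding dens_meas_def by (simp add: emeasure_density nn_integral_density)
  also have "\<dots> = ennreal (integral\<^sup>L M f)"
    by (rule nn_integral_eq_integral[OF D_integrable[OF f] D_nonneg[OF f]])
  also have "\<dots> = 1" using D_int1[OF f] by simp
  finally show "emeasure (dens_meas M f) (space (dens_meas M f)) = 1" .
qed

lemma indep_prod:
  assumes f: "f \<in> D"
    and ind: "prob_space.indep_set (dens_meas M f) {\<xi> -` A \<inter> space M | A. A \<in> sets borel} (sets C)"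
    and xi[measurable]: "\<xi> \<in> borel_measurable M"
    and g[measurable]: "g \<in> borel_measurable borel" and Y[measurable]: "Y \<in> borel_measurable C"
    and i1: "integrable M (\<lambda>x. f x * g (\<xi> x))" and i2: "integrable M (\<lambda>x. f x * Y x)"
  shows "integral\<^sup>L M (\<lambda>x. f x * (g (\<xi> x) * Y x)) = integral\<^sup>L M (\<lambda>x. f x * g (\<xi> x)) * integral\<^sup>L M (\<lambda>x. f x * Y x)"
proof -
  define Pf where "Pf = dens_meas M f"
  interpret Q: prob_space Pf unfolding Pf_def by (rule dens_prob[OF f])
  have [measurable]: "f \<in> borel_measurable M" using f by simp
  have YM[measurable]: "Y \<in> borel_measurable M" by (rule measC_M[OF Y])
  have sP: "sets Pf = sets M" unfolding Pf_def dens_meas_def by simp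
  have spP: "space Pf = space M" unfolding Pf_def dens_meas_def by simp
  have spC: "space C = space M" using subalg by (simp add: subalgebra_def)
  have fnn: "AE x in M. 0 \<le> f x" by (rule D_nonneg[OF f])
  define X where "X = (\<lambda>x. g (\<xi> x))"
  have XM[measurable]: "X \<in> borel_measurable M" unfolding X_def by measurable
  have XP: "X \<in> borel_measurable Pf" using XM by (simp add: measurable_def sP spP)
  have YP: "Y \<in> borel_measurable Pf" using YM by (simp add: measurable_def sP spP)
  define A1 where "A1 = {\<xi> -` A \<inter> space M | A. A \<in> sets borel}"
  have A1: "A1 = sets (vimage_algebra (space M) \<xi> borel)"
    unfolding A1_def by (subst sets_vimage_algebra2) auto
  have ind2: "A1 \<subseteq> Q.events \<and> sets C \<subseteq> Q.events \<and> (\<forall>a\<in>A1. \<forall>b\<in>sets C. Q.prob (a \<inter> b) = Q.prob a * Q.prob b)"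
    using ind unfolding Pf_def[symmetric] A1_def[symmetric] Q.indep_sets2_eq .
  have sub1: "sigma_sets (space Pf) {X -` A \<inter> space Pf | A. A \<in> sets borel} \<subseteq> A1"
  proof -
    have "{X -` A \<inter> space Pf | A. A \<in> sets borel} \<subseteq> sets (vimage_algebra (space M) \<xi> borel)"
    proof
      fix S assume "S \<in> {X -` A \<inter> space Pf | A. A \<in> sets borel}"
      then obtain A where A: "A \<in> sets borel" "S = X -` A \<inter> space Pf" by auto
      have "g -` A \<in> sets borel" using measurable_sets[OF g A(1)] by simp
      moreover have "S = \<xi> -` (g -` A) \<inter> space M" using A(2) spP by (auto simp: X_def)
      ultimately show "S \<in> sets (vimage_algebra (space M) \<xi> borel)"
        unfolding A1[symmetric] A1_def by blast
    qed
    from sets.sigma_sets_subset[OF this] show ?thesis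
      unfolding A1 spP by (simp add: space_vimage_algebra)
  qed
  have sub2: "sigma_sets (space Pf) {Y -` A \<inter> space Pf | A. A \<in> sets borel} \<subseteq> sets C"
  proof -
    have "{Y -` A \<inter> space Pf | A. A \<in> sets borel} \<subseteq> sets C"
      using measurable_sets[OF Y] spP spC by auto
    from sets.sigma_sets_subset[OF this] show ?thesis using spP spC by simp
  qed
  have indv: "Q.indep_var borel X borel Y"
    unfolding Q.indep_var_eq
  proof (intro conjI)
    show "X \<in> measurable Pf borel" using XP by simp
    show "Y \<in> measurable Pf borel" using YP by simp
    show "Q.indep_set (sigma_sets (space Pf) {X -` A \<inter> space Pf |A. A \<in> sets borel})
       (sigma_sets (space Pf) {Y -` A \<inter> space Pf |A. A \<in> sets borel})"
      unfolding Q.indep_sets2_eq using ind2 sub1 sub2 by blast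
  qed
  have iX: "integrable Pf X" unfolding Pf_def dens_meas_def
    using i1 by (subst integrable_density) (auto simp: X_def fnn)
  have iY: "integrable Pf Y" unfolding Pf_def dens_meas_def
    using i2 by (subst integrable_density) (auto simp: fnn)
  have "integral\<^sup>L Pf (\<lambda>x. X x * Y x) = integral\<^sup>L Pf X * integral\<^sup>L Pf Y"
    by (rule Q.indep_var_lebesgue_integral[OF indv iX iY])
  moreover have "integral\<^sup>L Pf (\<lambda>x. X x * Y x) = integral\<^sup>L M (\<lambda>x. f x * (g (\<xi> x) * Y x))"
    unfolding Pf_def dens_meas_def by (subst integral_density) (auto simp: X_def fnn)
  moreover have "integral\<^sup>L Pf X = integral\<^sup>L M (\<lambda>x. f x * g (\<xi> x))"
    unfolding Pf_def dens_meas_def by (subst integral_density) (auto simp: X_def fnn)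
  moreover have "integral\<^sup>L Pf Y = integral\<^sup>L M (\<lambda>x. f x * Y x)"
    unfolding Pf_def dens_meas_def by (subst integral_density) (auto simp: fnn)
  ultimately show ?thesis by simp
qed

end

context sett begin

lemma part4:
  assumes xi: "\<xi> \<in> Lp M ss"
    and ind: "\<forall>f\<in>D. prob_space.indep_set (dens_meas M f) {\<xi> -` A \<inter> space M | A. A \<in> sets borel} (sets C)"
  shows "\<exists>c. AE x in M. cr \<xi> x = c"
proof -
  define e where "e = cr \<xi>"
  have eL: "e \<in> Lsub" unfolding e_def by (rule cr_Lsub[OF xi])
  have xir: "\<xi> \<in> Lp M rr" by (rule Lss_Lr[OF xi])
  have er: "e \<in> Lp M rr" by (rule Lsub_Lp[OF eL])
  have [measurable]: "\<xi> \<in> borel_measurable M" "e \<in> borel_measurable M" "e \<in> borel_measurable C"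
    using xir er eL Lp_meas Lsub_measC by auto
  have mn: "is_cond_min M C eps \<rho> \<xi> e" unfolding e_def by (rule cr_min[OF xi])
  define c where "c = integral\<^sup>L M e"
  have ie: "integrable M e" using Lp_mono_exp[OF fin er, of 1] eps0 by (simp add: Lp_one_integrable)
  have constr: "\<And>a. (\<lambda>x. a) \<in> Lp M rr" by (rule Lp_const[OF fin])
  have key: "integral\<^sup>L M (\<lambda>x. f x * (\<xi> x - c)\<^sup>2) \<le> F (\<lambda>x. (\<xi> x - e x)\<^sup>2)" if f: "f \<in> D" for f
  proof -
    have [measurable]: "f \<in> borel_measurable M" using f by simp
    define h where "h = nf f"
    have hn: "normd h" unfolding h_def by (rule normd_nf[OF f])
    have hD: "h \<in> D" using hn by (simp add: normd_def)
    have [measurable]: "h \<in> borel_measurable M" using hD by simp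
    have a: "integral\<^sup>L M (\<lambda>x. f x * (\<xi> x - c)\<^sup>2) = integral\<^sup>L M (\<lambda>x. h x * (\<xi> x - c)\<^sup>2)"
    proof -
      have i1: "integrable M (\<lambda>x. f x * (\<xi> x - c)\<^sup>2)" by (rule Phi_int[OF f xir constr])
      have i2: "integrable M (\<lambda>x. f x * (1 / cf f x))"
        using D_integrable[OF hD] by (simp add: h_def nf_def)
      have "integral\<^sup>L M (\<lambda>x. f x * ((\<xi> x - c)\<^sup>2 * (1 / cf f x)))
          = integral\<^sup>L M (\<lambda>x. f x * (\<xi> x - c)\<^sup>2) * integral\<^sup>L M (\<lambda>x. f x * (1 / cf f x))"
        by (rule indep_prod[OF f ind[rule_format, OF f], where g="\<lambda>y. (y - c)\<^sup>2"]) (use i1 i2 in auto)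
      moreover have "integral\<^sup>L M (\<lambda>x. f x * (1 / cf f x)) = 1"
        using D_int1[OF hD] by (simp add: h_def nf_def)
      moreover have "(\<lambda>x. f x * ((\<xi> x - c)\<^sup>2 * (1 / cf f x))) = (\<lambda>x. h x * (\<xi> x - c)\<^sup>2)"
        by (auto simp: h_def nf_def)
      ultimately show ?thesis by simp
    qed
    define m where "m = integral\<^sup>L M (\<lambda>x. h x * \<xi> x)"
    have ihx: "integrable M (\<lambda>x. h x * \<xi> x)" by (rule D_Lq_int[OF hD Lss_Lq[OF xi]])
    have ih: "integrable M h" by (rule D_integrable[OF hD])
    have h1: "integral\<^sup>L M h = 1" by (rule D_int1[OF hD])
    have ihxm: "integrable M (\<lambda>x. h x * (\<xi> x - m))"
    proof -
      have "integrable M (\<lambda>x. h x * \<xi> x - m * h x)" using ihx ih by simp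
      thus ?thesis by (simp add: algebra_simps)
    qed
    have z: "integral\<^sup>L M (\<lambda>x. h x * (\<xi> x - m)) = 0"
    proof -
      have "integral\<^sup>L M (\<lambda>x. h x * (\<xi> x - m)) = integral\<^sup>L M (\<lambda>x. h x * \<xi> x - m * h x)"
        by (simp add: algebra_simps)
      also have "\<dots> = m - m * 1" using ihx ih h1 by (simp add: m_def)
      finally show ?thesis by simp
    qed
    have d: "integral\<^sup>L M (\<lambda>x. h x * (\<xi> x - c)\<^sup>2) = integral\<^sup>L M (\<lambda>x. h x * (\<xi> x - m)\<^sup>2) + (m - c)\<^sup>2"
    proof -
      have i1: "integrable M (\<lambda>x. h x * (\<xi> x - m)\<^sup>2)" by (rule Phi_int[OF hD xir constr])
      have pw: "h x * (\<xi> x - c)\<^sup>2 = h x * (\<xi> x - m)\<^sup>2 + (2 * (m - c)) * (h x * (\<xi> x - m)) + (m - c)\<^sup>2 * h x" for x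
        by (simp add: power2_eq_square algebra_simps)
      have "integral\<^sup>L M (\<lambda>x. h x * (\<xi> x - c)\<^sup>2) = integral\<^sup>L M (\<lambda>x. h x * (\<xi> x - m)\<^sup>2)
          + (2 * (m - c)) * integral\<^sup>L M (\<lambda>x. h x * (\<xi> x - m)) + (m - c)\<^sup>2 * integral\<^sup>L M h"
        unfolding pw using i1 ihxm ih by simp
      thus ?thesis using z h1 by simp
    qed
    have b: "integral\<^sup>L M (\<lambda>x. h x * (\<xi> x - e x)\<^sup>2)
        = integral\<^sup>L M (\<lambda>x. h x * (\<xi> x - m)\<^sup>2) + integral\<^sup>L M (\<lambda>x. h x * (m - e x)\<^sup>2)"
    proof -
      have i1: "integrable M (\<lambda>x. h x * (\<xi> x - m)\<^sup>2)" by (rule Phi_int[OF hD xir constr])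
      have i2: "integrable M (\<lambda>x. h x * (m - e x)\<^sup>2)" by (rule Phi_int[OF hD constr er])
      have mer: "(\<lambda>x. m - e x) \<in> Lp M rr" using Lp_diff[OF constr er] eps0 by simp
      have ihme: "integrable M (\<lambda>x. h x * (m - e x))"
        by (rule D_Lq_int[OF hD Lp_mono_exp[OF fin mer]]) (use eps0 in auto)
      have mC[measurable]: "(\<lambda>x. m - e x) \<in> borel_measurable C" by measurable
      have cr0: "integral\<^sup>L M (\<lambda>x. h x * ((\<xi> x - m) * (m - e x))) = 0"
      proof -
        have "integral\<^sup>L M (\<lambda>x. h x * ((\<xi> x - m) * (m - e x)))
           = integral\<^sup>L M (\<lambda>x. h x * (\<xi> x - m)) * integral\<^sup>L M (\<lambda>x. h x * (m - e x))"
          by (rule indep_prod[OF hD ind[rule_format, OF hD], where g="\<lambda>y. y - m" and Y="\<lambda>x. m - e x"])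
            (use ihxm ihme in auto)
        thus ?thesis using z by simp
      qed
      have icr: "integrable M (\<lambda>x. h x * ((\<xi> x - m) * (m - e x)))"
      proof -
        have eq: "(\<lambda>x. h x * ((\<xi> x - m) * (m - e x))) = (\<lambda>x. (h x * (\<xi> x - e x)\<^sup>2 - h x * (\<xi> x - m)\<^sup>2 - h x * (m - e x)\<^sup>2) / 2)"
          by (auto simp: power2_eq_square algebra_simps)
        show ?thesis unfolding eq using Phi_int[OF hD xir er] i1 i2 by simp
      qed
      have pw: "h x * (\<xi> x - e x)\<^sup>2 = h x * (\<xi> x - m)\<^sup>2 + h x * (m - e x)\<^sup>2 + 2 * (h x * ((\<xi> x - m) * (m - e x)))" for x
        by (simp add: power2_eq_square algebra_simps)
      show ?thesis unfolding pw using i1 i2 icr cr0 by simp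
    qed
    have cc: "(m - c)\<^sup>2 \<le> integral\<^sup>L M (\<lambda>x. h x * (m - e x)\<^sup>2)"
    proof -
      have i2: "integrable M (\<lambda>x. h x * (m - e x)\<^sup>2)" by (rule Phi_int[OF hD constr er])
      have gC: "(\<lambda>x. (m - e x)\<^sup>2) \<in> borel_measurable C" by measurable
      have eqn: "integral\<^sup>L M (\<lambda>x. h x * (m - e x)\<^sup>2) = integral\<^sup>L M (\<lambda>x. (m - e x)\<^sup>2)"
        and ig: "integrable M (\<lambda>x. (m - e x)\<^sup>2)" using normd_int[OF hn gC i2] by auto
      have ice: "integrable M (\<lambda>x. (c - e x)\<^sup>2)"
        using Lp_sq[OF Lp_diff[OF constr er]] eps0 Lp_mono_exp[OF fin, of _ "rr/2" 1]
        by (simp add: Lp_one_integrable)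
      have pw: "(m - e x)\<^sup>2 = (m - c)\<^sup>2 + (2 * (m - c)) * c - (2 * (m - c)) * e x + (c - e x)\<^sup>2" for x
        by (simp add: power2_eq_square algebra_simps)
      have "integral\<^sup>L M (\<lambda>x. (m - e x)\<^sup>2) = (m - c)\<^sup>2 + (2 * (m - c)) * c - (2 * (m - c)) * integral\<^sup>L M e
           + integral\<^sup>L M (\<lambda>x. (c - e x)\<^sup>2)"
        unfolding pw using ie ice by (simp add: P.prob_space)
      also have "\<dots> = (m - c)\<^sup>2 + integral\<^sup>L M (\<lambda>x. (c - e x)\<^sup>2)" by (simp add: c_def)
      finally have "integral\<^sup>L M (\<lambda>x. (m - e x)\<^sup>2) = (m - c)\<^sup>2 + integral\<^sup>L M (\<lambda>x. (c - e x)\<^sup>2)" .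
      moreover have "0 \<le> integral\<^sup>L M (\<lambda>x. (c - e x)\<^sup>2)" by simp
      ultimately show ?thesis using eqn by simp
    qed
    have "integral\<^sup>L M (\<lambda>x. f x * (\<xi> x - c)\<^sup>2) \<le> integral\<^sup>L M (\<lambda>x. h x * (\<xi> x - e x)\<^sup>2)"
      using a b cc d by simp
    also have "\<dots> \<le> F (\<lambda>x. (\<xi> x - e x)\<^sup>2)" by (rule F_ge[OF sqLq[OF xir er] hD])
    finally show ?thesis .
  qed
  have "is_cond_min M C eps \<rho> \<xi> (\<lambda>x. c)"
  proof (rule cond_minI[OF Lsub_const])
    fix \<zeta> assume z: "\<zeta> \<in> Lsub"
    have "F (\<lambda>x. (\<xi> x - c)\<^sup>2) \<le> F (\<lambda>x. (\<xi> x - e x)\<^sup>2)" by (rule F_least[OF D_ne key])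
    also have "\<dots> \<le> F (\<lambda>x. (\<xi> x - \<zeta> x)\<^sup>2)" by (rule cond_min_le[OF D_ne xir mn z])
    finally show "F (\<lambda>x. (\<xi> x - c)\<^sup>2) \<le> F (\<lambda>x. (\<xi> x - \<zeta> x)\<^sup>2)" .
  qed
  hence "AE x in M. c = cr \<xi> x" by (rule cr_unique[OF xi])
  thus ?thesis by (intro exI[of _ c]) (auto elim!: eventually_mono)
qed

end

theorem proposition4:
  fixes M C :: "'a measure" and eps :: real and \<rho> :: "('a \<Rightarrow> real) \<Rightarrow> real"
    and \<xi> :: "'a \<Rightarrow> real"
  assumes "prob_space M" and "complete_measure M"
    and "0 < eps" and "eps < 1"
    and "subalgebra M C"
    and "sublinear_op M eps \<rho>"
    and "standing_assm M eps \<rho>"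
    and "stable M C eps \<rho>" and "proper M eps \<rho>"
    and "\<xi> \<in> Lp M (4 + 2*eps)"
  shows
    "(\<forall>C1 C2. (AE x in M. C1 \<le> \<xi> x \<and> \<xi> x \<le> C2) \<longrightarrow>
        (AE x in M. C1 \<le> cond_rho M C eps \<rho> \<xi> x \<and> cond_rho M C eps \<rho> \<xi> x \<le> C2))
   \<and> (\<forall>l::real. AE x in M. cond_rho M C eps \<rho> (\<lambda>y. l * \<xi> y) x = l * cond_rho M C eps \<rho> \<xi> x)
   \<and> (\<forall>\<eta>0\<in>Lp_sub M C (2+eps).
        (AE x in M. cond_rho M C eps \<rho> (\<lambda>y. \<xi> y + \<eta>0 y) x = cond_rho M C eps \<rho> \<xi> x + \<eta>0 x)
      \<and> is_cond_min M C eps \<rho> (\<lambda>y. \<xi> y + \<eta>0 y) (\<lambda>y. cond_rho M C eps \<rho> \<xi> y + \<eta>0 y)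
      \<and> (\<forall>\<eta>. is_cond_min M C eps \<rho> (\<lambda>y. \<xi> y + \<eta>0 y) \<eta> \<longrightarrow>
            (AE x in M. \<eta> x = cond_rho M C eps \<rho> \<xi> x + \<eta>0 x)))
   \<and> ((\<forall>f\<in>dens M eps \<rho>. prob_space.indep_set (dens_meas M f)
          {\<xi> -` A \<inter> space M | A. A \<in> sets borel} (sets C))
      \<longrightarrow> (\<exists>c. AE x in M. cond_rho M C eps \<rho> \<xi> x = c))"
proof -
  interpret S: sett M C eps \<rho>
    using assms by (simp add: sett_def)
  show ?thesis
  proof (intro conjI)
    show "\<forall>C1 C2. (AE x in M. C1 \<le> \<xi> x \<and> \<xi> x \<le> C2) \<longrightarrow>
        (AE x in M. C1 \<le> cond_rho M C eps \<rho> \<xi> x \<and> cond_rho M C eps \<rho> \<xi> x \<le> C2)"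
      using S.part1[OF assms(10)] by blast
    show "\<forall>l::real. AE x in M. cond_rho M C eps \<rho> (\<lambda>y. l * \<xi> y) x = l * cond_rho M C eps \<rho> \<xi> x"
      using S.part2[OF assms(10)] by blast
    show "\<forall>\<eta>0\<in>Lp_sub M C (2+eps).
        (AE x in M. cond_rho M C eps \<rho> (\<lambda>y. \<xi> y + \<eta>0 y) x = cond_rho M C eps \<rho> \<xi> x + \<eta>0 x)
      \<and> is_cond_min M C eps \<rho> (\<lambda>y. \<xi> y + \<eta>0 y) (\<lambda>y. cond_rho M C eps \<rho> \<xi> y + \<eta>0 y)
      \<and> (\<forall>\<eta>. is_cond_min M C eps \<rho> (\<lambda>y. \<xi> y + \<eta>0 y) \<eta> \<longrightarrow>
            (AE x in M. \<eta> x = cond_rho M C eps \<rho> \<xi> x + \<eta>0 x))"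
      using S.part3[OF assms(10)] by blast
    show "(\<forall>f\<in>dens M eps \<rho>. prob_space.indep_set (dens_meas M f)
          {\<xi> -` A \<inter> space M | A. A \<in> sets borel} (sets C))
      \<longrightarrow> (\<exists>c. AE x in M. cond_rho M C eps \<rho> \<xi> x = c)"
      using S.part4[OF assms(10)] by blast
  qed
qed

end
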